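(* Let $\Phi=B_n$ or $D_n$, and let $D\subset\Phi^+$ be an orthogonal subset satisfying Assumption (A) with $D\cap\mathcal C_1=\{\varepsilon_1-\varepsilon_j,\varepsilon_1+\varepsilon_j\}$ for some $1<j\le n$. Let $\tilde\Phi^+$ be the set of roots of $\Phi^+$ involving neither $\varepsilon_1$ nor $\varepsilon_j$ (i.e. $\Phi^+\setminus(\mathcal C_1\cup\mathcal C_j\cup\mathcal R_j\cup\mathcal R_{-j})$), $\tilde D=D\cap\tilde\Phi^+$, $\tilde\sigma=\prod_{\beta\in\tilde D}r_\beta$, and $l'(\tilde\sigma)=\#\{\alpha\in\tilde\Phi^+:\tilde\sigma(\alpha)\notin\tilde\Phi^+\}$. Then $$l(\sigma)=l'(\tilde\sigma)+|\mathcal C_1|+|\mathcal C_j|+4\,\#\{(l,s):1<l<s<j,\ \varepsilon_l+\varepsilon_s\in\tilde D\}+2\,\#\{(l,s):1<l<j<s,\ \varepsilon_l-\varepsilon_s,\varepsilon_l+\varepsilon_s\in\tilde D\}+2\,\#\{l:1<l<j,\ \varepsilon_l\in\tilde D\}.$$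
   Context: Let $\Phi$ be a root system of type $B_n$, $C_n$ or $D_n$ in $\mathbb R^n$ with standard basis $\varepsilon_1,\dots,\varepsilon_n$ and positive roots $\Phi^+=\{\varepsilon_i\pm\varepsilon_j:1\le i<j\le n\}\cup\Phi_1^+$, where $\Phi_1^+=\emptyset$ for $D_n$, $\{\varepsilon_i\}$ for $B_n$, $\{2\varepsilon_i\}$ for $C_n$. $D\subset\Phi^+$ is orthogonal if its roots are pairwise orthogonal. Assumption (A): if $\Phi=B_n$, $D$ contains at most one root of the form $\varepsilon_i$; if $\Phi=C_n$, $D$ does not contain both $\varepsilon_i-\varepsilon_j$ and $\varepsilon_i+\varepsilon_j$ for any $i<j$. $r_\beta$ denotes the reflection in the hyperplane orthogonal to $\beta$, $\sigma=\prod_{\beta\in D}r_\beta$, and $l(\sigma)=\#\{\alpha\in\Phi^+:\sigma(\alpha)\in-\Phi^+\}$ (the length of $\sigma$ in the Weyl group). $\mathrm{col}(\varepsilon_i\pm\varepsilon_j)=\mathrm{col}(\varepsilon_i)=i$; $\mathrm{row}(\varepsilon_i\pm\varepsilon_j)=\mp j$, $\mathrm{row}(\varepsilon_i)=0$; $\mathcal R_i=\{\alpha\in\Phi^+:\mathrm{row}(\alpha)=i\}$, $\mathcal C_j=\{\alpha\in\Phi^+:\mathrm{col}(\alpha)=j\}$. *)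

theory Defs
  imports Complex_Main
begin

text \<open>Vectors of R^n are represented as functions nat => real, coordinates 1..n
  (all roots vanish outside {1..n}).\<close>

datatype rtype = TypeB | TypeC | TypeD

definition eps :: "nat \<Rightarrow> nat \<Rightarrow> real" where
  "eps i = (\<lambda>k. if k = i then 1 else 0)"

definition inner_n :: "nat \<Rightarrow> (nat \<Rightarrow> real) \<Rightarrow> (nat \<Rightarrow> real) \<Rightarrow> real" where
  "inner_n n u v = (\<Sum>k\<in>{1..n}. u k * v k)"

definition short_roots :: "rtype \<Rightarrow> nat \<Rightarrow> (nat \<Rightarrow> real) set" where
  "short_roots t n = (case t of
      TypeB \<Rightarrow> {eps i | i. 1 \<le> i \<and> i \<le> n}
    | TypeC \<Rightarrow> {(\<lambda>k. 2 * eps i k) | i. 1 \<le> i \<and> i \<le> n}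
    | TypeD \<Rightarrow> {})"

definition pos_roots :: "rtype \<Rightarrow> nat \<Rightarrow> (nat \<Rightarrow> real) set" where
  "pos_roots t n =
     {(\<lambda>k. eps i k - eps j k) | i j. 1 \<le> i \<and> i < j \<and> j \<le> n}
   \<union> {(\<lambda>k. eps i k + eps j k) | i j. 1 \<le> i \<and> i < j \<and> j \<le> n}
   \<union> short_roots t n"

definition orthogonal_set :: "nat \<Rightarrow> (nat \<Rightarrow> real) set \<Rightarrow> bool" where
  "orthogonal_set n D \<longleftrightarrow> (\<forall>\<alpha>\<in>D. \<forall>\<beta>\<in>D. \<alpha> \<noteq> \<beta> \<longrightarrow> inner_n n \<alpha> \<beta> = 0)"

definition assumption_A :: "rtype \<Rightarrow> nat \<Rightarrow> (nat \<Rightarrow> real) set \<Rightarrow> bool" where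
  "assumption_A t n D \<longleftrightarrow>
     (t = TypeB \<longrightarrow> card (D \<inter> {eps i | i. 1 \<le> i \<and> i \<le> n}) \<le> 1) \<and>
     (t = TypeC \<longrightarrow> (\<forall>i j. 1 \<le> i \<and> i < j \<and> j \<le> n \<longrightarrow>
         \<not> ((\<lambda>k. eps i k - eps j k) \<in> D \<and> (\<lambda>k. eps i k + eps j k) \<in> D)))"

definition refl :: "nat \<Rightarrow> (nat \<Rightarrow> real) \<Rightarrow> (nat \<Rightarrow> real) \<Rightarrow> (nat \<Rightarrow> real)" where
  "refl n \<beta> v = (\<lambda>k. v k - (2 * inner_n n v \<beta> / inner_n n \<beta> \<beta>) * \<beta> k)"

text \<open>Product of the reflections in a (finite, orthogonal) set; the reflections commute.\<close>
definition refl_prod :: "nat \<Rightarrow> (nat \<Rightarrow> real) set \<Rightarrow> (nat \<Rightarrow> real) \<Rightarrow> (nat \<Rightarrow> real)" where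
  "refl_prod n D = Finite_Set.fold (\<lambda>\<beta> f. refl n \<beta> \<circ> f) id D"

definition weyl_length :: "rtype \<Rightarrow> nat \<Rightarrow> ((nat \<Rightarrow> real) \<Rightarrow> (nat \<Rightarrow> real)) \<Rightarrow> nat" where
  "weyl_length t n w = card {\<alpha> \<in> pos_roots t n. (\<lambda>k. - w \<alpha> k) \<in> pos_roots t n}"

definition col :: "(nat \<Rightarrow> real) \<Rightarrow> nat" where
  "col \<alpha> = (if \<exists>i j. i < j \<and> (\<alpha> = (\<lambda>k. eps i k - eps j k) \<or> \<alpha> = (\<lambda>k. eps i k + eps j k))
             then (SOME i. \<exists>j. i < j \<and> (\<alpha> = (\<lambda>k. eps i k - eps j k) \<or> \<alpha> = (\<lambda>k. eps i k + eps j k)))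
             else (SOME i. \<alpha> = eps i \<or> \<alpha> = (\<lambda>k. 2 * eps i k)))"

definition row :: "(nat \<Rightarrow> real) \<Rightarrow> int" where
  "row \<alpha> = (if \<exists>i j. i < j \<and> \<alpha> = (\<lambda>k. eps i k - eps j k)
             then int (SOME j. \<exists>i. i < j \<and> \<alpha> = (\<lambda>k. eps i k - eps j k))
             else if \<exists>i j. i < j \<and> \<alpha> = (\<lambda>k. eps i k + eps j k)
             then - int (SOME j. \<exists>i. i < j \<and> \<alpha> = (\<lambda>k. eps i k + eps j k))
             else 0)"

definition Rows :: "rtype \<Rightarrow> nat \<Rightarrow> int \<Rightarrow> (nat \<Rightarrow> real) set" where
  "Rows t n i = {\<alpha> \<in> pos_roots t n. row \<alpha> = i}"

definition Cols :: "rtype \<Rightarrow> nat \<Rightarrow> nat \<Rightarrow> (nat \<Rightarrow> real) set" where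
  "Cols t n j = {\<alpha> \<in> pos_roots t n. col \<alpha> = j}"

end

theory Submission
  imports Defs
begin

definition em :: "nat \<Rightarrow> nat \<Rightarrow> nat \<Rightarrow> real" where "em a b = (\<lambda>k. eps a k - eps b k)"
definition ep :: "nat \<Rightarrow> nat \<Rightarrow> nat \<Rightarrow> real" where "ep a b = (\<lambda>k. eps a k + eps b k)"

lemma eps_apply[simp]: "eps a k = (if k = a then 1 else 0)" by (simp add: eps_def)
lemma em_apply[simp]: "em a b k = (if k = a then 1 else 0) - (if k = b then 1 else 0)" by (simp add: em_def)
lemma ep_apply[simp]: "ep a b k = (if k = a then 1 else 0) + (if k = b then 1 else 0)" by (simp add: ep_def)

lemma inner_comm: "inner_n n u v = inner_n n v u"
  by (simp add: inner_n_def mult.commute)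

lemma inner_eps_left: "inner_n n (eps a) v = (if 1 \<le> a \<and> a \<le> n then v a else 0)"
proof -
  have "inner_n n (eps a) v = (\<Sum>k\<in>{1..n}. if k = a then v k else 0)"
    unfolding inner_n_def by (rule sum.cong) auto
  also have "\<dots> = (if 1 \<le> a \<and> a \<le> n then v a else 0)" by (simp add: sum.delta)
  finally show ?thesis .
qed

lemma inner_em_left: "inner_n n (em a b) v = inner_n n (eps a) v - inner_n n (eps b) v"
  unfolding inner_n_def em_def by (simp add: left_diff_distrib sum_subtractf)
lemma inner_ep_left: "inner_n n (ep a b) v = inner_n n (eps a) v + inner_n n (eps b) v"
  unfolding inner_n_def ep_def by (simp add: distrib_right sum.distrib)

lemmas inner_simps = inner_em_left inner_ep_left inner_eps_left
lemma inner_right: "inner_n n v (em a b) = inner_n n (em a b) v" "inner_n n v (ep a b) = inner_n n (ep a b) v"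
   "inner_n n v (eps a) = inner_n n (eps a) v"
  by (simp_all add: inner_comm)

lemma test: "1 \<le> a \<Longrightarrow> a < b \<Longrightarrow> b \<le> n \<Longrightarrow> 1 \<le> c \<Longrightarrow> c < d \<Longrightarrow> d \<le> n \<Longrightarrow> inner_n n (ep a b) (em c d) = 0 \<Longrightarrow> a \<noteq> c \<or> b = d"
  by (auto simp: inner_simps split: if_splits)



lemma inner_lin: "inner_n n (\<lambda>k. v k - c * w k) b = inner_n n v b - c * inner_n n w b"
  unfolding inner_n_def by (simp add: left_diff_distrib sum_subtractf sum_distrib_left mult.assoc)

lemma inner_sum: "inner_n n (\<lambda>k. \<Sum>g\<in>B. f g * g k) b = (\<Sum>g\<in>B. f g * inner_n n g b)"
  unfolding inner_n_def by (simp add: sum_distrib_right sum_distrib_left mult.assoc) (rule sum.swap)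

lemma inner_lin2: "inner_n n (\<lambda>k. v k - (\<Sum>g\<in>B. f g * g k)) b = inner_n n v b - (\<Sum>g\<in>B. f g * inner_n n g b)"
proof -
  have "inner_n n (\<lambda>k. v k - (\<Sum>g\<in>B. f g * g k)) b = inner_n n v b - inner_n n (\<lambda>k. \<Sum>g\<in>B. f g * g k) b"
    unfolding inner_n_def by (simp add: left_diff_distrib sum_subtractf)
  then show ?thesis by (simp add: inner_sum)
qed

definition sig :: "nat \<Rightarrow> (nat \<Rightarrow> real) set \<Rightarrow> (nat \<Rightarrow> real) \<Rightarrow> (nat \<Rightarrow> real)" where
  "sig n D v = (\<lambda>k. v k - (\<Sum>b\<in>D. 2 * inner_n n v b / inner_n n b b * b k))"

lemma refl_comm:
  assumes "inner_n n b g = 0"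
  shows "refl n b \<circ> refl n g = refl n g \<circ> refl n b"
proof -
  have bg: "inner_n n g b = 0" using assms by (simp add: inner_comm)
  have "refl n b (refl n g v) = refl n g (refl n b v)" for v
    unfolding refl_def inner_lin
    by (simp add: assms bg algebra_simps)
  then show ?thesis by auto
qed

lemma sig_insert:
  assumes "finite B" "b \<notin> B" "\<forall>g\<in>B. inner_n n g b = 0"
  shows "refl n b (sig n B v) = sig n (insert b B) v"
proof -
  have "inner_n n (sig n B v) b = inner_n n v b"
    unfolding sig_def
    using inner_lin2[of n v "\<lambda>g. 2 * inner_n n v g / inner_n n g g" B b] assms(3)
    by (simp add: times_divide_eq_left)
  then show ?thesis
    unfolding refl_def using assms(1,2)
    by (simp add: sig_def algebra_simps)
qed

lemma refl_prod_sig: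
  assumes "finite D" "orthogonal_set n D"
  shows "refl_prod n D = sig n D"
proof -
  interpret comp_fun_commute_on D "\<lambda>b f. refl n b \<circ> f"
  proof
    fix x y assume "x \<in> D" "y \<in> D"
    show "(\<lambda>f. refl n y \<circ> f) \<circ> (\<lambda>f. refl n x \<circ> f) = (\<lambda>f. refl n x \<circ> f) \<circ> (\<lambda>f. refl n y \<circ> f)"
    proof (cases "x = y")
      case False
      then have "inner_n n y x = 0" using assms(2) \<open>x \<in> D\<close> \<open>y \<in> D\<close> unfolding orthogonal_set_def by auto
      then have "refl n y \<circ> refl n x = refl n x \<circ> refl n y" by (rule refl_comm)
      then show ?thesis by (auto simp: fun_eq_iff o_def)
    qed simp
  qed
  have "\<forall>v. Finite_Set.fold (\<lambda>b f. refl n b \<circ> f) id B v = sig n B v" if "B \<subseteq> D" for B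
    using assms(1) that
  proof (induction B rule: infinite_finite_induct)
    case (infinite A) then show ?case using finite_subset[OF _ assms(1)] by blast
  next
    case empty then show ?case by (simp add: sig_def)
  next
    case (insert x F)
    have "\<forall>g\<in>F. inner_n n g x = 0" using insert.prems assms(2) insert.hyps(2) unfolding orthogonal_set_def by auto
    have f: "Finite_Set.fold (\<lambda>b f. refl n b \<circ> f) id (insert x F) = refl n x \<circ> Finite_Set.fold (\<lambda>b f. refl n b \<circ> f) id F"
      by (rule fold_insert) (use insert in auto)
    show ?case
    proof
      fix v
      show "Finite_Set.fold (\<lambda>b f. refl n b \<circ> f) id (insert x F) v = sig n (insert x F) v"
      proof -
        have ih: "Finite_Set.fold (\<lambda>b f. refl n b \<circ> f) id F v = sig n F v"
          using insert.IH insert.prems by blast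
        show ?thesis unfolding f comp_apply ih
          by (rule sig_insert[OF insert.hyps(1,2) \<open>\<forall>g\<in>F. inner_n n g x = 0\<close>])
      qed
    qed
  qed
  then show ?thesis unfolding refl_prod_def by auto
qed



lemma inner_add: "inner_n n (\<lambda>k. u k + w k) b = inner_n n u b + inner_n n w b"
  unfolding inner_n_def by (simp add: distrib_right sum.distrib)
lemma inner_sub: "inner_n n (\<lambda>k. u k - w k) b = inner_n n u b - inner_n n w b"
  unfolding inner_n_def by (simp add: left_diff_distrib sum_subtractf)
lemma inner_scale: "inner_n n (\<lambda>k. c * u k) b = c * inner_n n u b"
  unfolding inner_n_def by (simp add: sum_distrib_left mult.assoc)

lemma sig_add: "sig n D (\<lambda>k. u k + w k) = (\<lambda>k. sig n D u k + sig n D w k)"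
  unfolding sig_def inner_add
  by (simp add: add_divide_distrib distrib_left distrib_right sum.distrib fun_eq_iff)

lemma sig_sub: "sig n D (\<lambda>k. u k - w k) = (\<lambda>k. sig n D u k - sig n D w k)"
  unfolding sig_def inner_sub
  by (simp add: diff_divide_distrib right_diff_distrib left_diff_distrib sum_subtractf fun_eq_iff)

lemma sig_scale: "sig n D (\<lambda>k. c * u k) = (\<lambda>k. c * sig n D u k)"
  unfolding sig_def inner_scale
  by (simp add: sum_distrib_left right_diff_distrib fun_eq_iff mult_ac)

lemma sig_em: "sig n D (em a b) = (\<lambda>k. sig n D (eps a) k - sig n D (eps b) k)"
  unfolding em_def by (rule sig_sub)
lemma sig_ep: "sig n D (ep a b) = (\<lambda>k. sig n D (eps a) k + sig n D (eps b) k)"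
  unfolding ep_def by (rule sig_add)

lemma sig_invol:
  assumes "finite D" "orthogonal_set n D" "\<forall>b\<in>D. inner_n n b b \<noteq> 0"
  shows "sig n D (sig n D v) = v"
proof -
  have key: "inner_n n (sig n D v) b = - inner_n n v b" if b: "b \<in> D" for b
  proof -
    have "(\<Sum>g\<in>D. 2 * inner_n n v g / inner_n n g g * inner_n n g b)
        = 2 * inner_n n v b / inner_n n b b * inner_n n b b
          + (\<Sum>g\<in>D - {b}. 2 * inner_n n v g / inner_n n g g * inner_n n g b)"
      using b assms(1) by (simp add: sum.remove)
    also have "(\<Sum>g\<in>D - {b}. 2 * inner_n n v g / inner_n n g g * inner_n n g b) = 0"
      using b assms(2) unfolding orthogonal_set_def by (intro sum.neutral) auto
    finally have "(\<Sum>g\<in>D. 2 * inner_n n v g / inner_n n g g * inner_n n g b) = 2 * inner_n n v b"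
      using assms(3) b by simp
    then show ?thesis unfolding sig_def
      using inner_lin2[of n v "\<lambda>g. 2 * inner_n n v g / inner_n n g g" D b] by simp
  qed
  have "(\<Sum>b\<in>D. 2 * inner_n n (sig n D v) b / inner_n n b b * b k)
      = - (\<Sum>b\<in>D. 2 * inner_n n v b / inner_n n b b * b k)" for k
    by (simp add: key sum_negf[symmetric] cong: sum.cong)
  then show ?thesis unfolding sig_def[of n D "sig n D v"] by (simp add: sig_def fun_eq_iff)
qed



lemma eps_eq_iff[simp]: "eps a = eps b \<longleftrightarrow> a = b"
proof
  assume "eps a = eps b" then have "eps a a = eps b a" by simp
  then show "a = b" by (simp split: if_splits)
qed simp

lemma em_eq_iff: assumes "a \<noteq> b" shows "em a b = em c d \<longleftrightarrow> a = c \<and> b = d"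
proof
  assume h: "em a b = em c d"
  then have "em a b a = em c d a" "em a b b = em c d b" by simp_all
  then show "a = c \<and> b = d" using assms by (auto split: if_splits)
qed simp

lemma ep_eq_iff: assumes "a \<noteq> b" "c \<noteq> d" shows "ep a b = ep c d \<longleftrightarrow> (a = c \<and> b = d) \<or> (a = d \<and> b = c)"
proof
  assume h: "ep a b = ep c d"
  then have "ep a b a = ep c d a" "ep a b b = ep c d b" "ep a b c = ep c d c" by simp_all
  then show "(a = c \<and> b = d) \<or> (a = d \<and> b = c)" using assms by (auto split: if_splits)
next
  assume "(a = c \<and> b = d) \<or> (a = d \<and> b = c)"
  then show "ep a b = ep c d" by (auto simp: fun_eq_iff)
qed

lemma em_ne_ep: assumes "a \<noteq> b" shows "em a b \<noteq> ep c d" "ep c d \<noteq> em a b"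
proof -
  show "em a b \<noteq> ep c d"
  proof
    assume "em a b = ep c d" then have "em a b b = ep c d b" by simp
    then show False using assms by (auto split: if_splits)
  qed
  then show "ep c d \<noteq> em a b" by metis
qed

lemma eps_ne_em: assumes "a \<noteq> b" shows "eps c \<noteq> em a b" "em a b \<noteq> eps c"
proof -
  show "eps c \<noteq> em a b"
  proof
    assume "eps c = em a b" then have "eps c b = em a b b" by simp
    then show False using assms by (auto split: if_splits)
  qed
  then show "em a b \<noteq> eps c" by metis
qed

lemma eps_ne_ep: assumes "a \<noteq> b" shows "eps c \<noteq> ep a b" "ep a b \<noteq> eps c"
proof -
  show "eps c \<noteq> ep a b"
  proof
    assume "eps c = ep a b" then have "eps c b = ep a b b" "eps c a = ep a b a" by simp_all
    then show False using assms by (auto split: if_splits)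
  qed
  then show "ep a b \<noteq> eps c" by metis
qed

lemma em_lam: "(\<lambda>k. eps a k - eps b k) = em a b" by (simp add: em_def)
lemma ep_lam: "(\<lambda>k. eps a k + eps b k) = ep a b" by (simp add: ep_def)

definition rv :: "nat \<times> nat \<times> bool \<Rightarrow> nat \<Rightarrow> real" where
  "rv x = (case x of (a, b, s) \<Rightarrow> if s then ep a b else em a b)"

definition Iset :: "nat \<Rightarrow> (nat \<times> nat \<times> bool) set" where
  "Iset n = {(a, b, s). 1 \<le> a \<and> a < b \<and> b \<le> n}"

definition shs :: "rtype \<Rightarrow> nat set \<Rightarrow> (nat \<Rightarrow> real) set" where
  "shs t A = (if t = TypeB then eps ` A else {})"

lemma pos_roots_rv:
  assumes "t \<noteq> TypeC"
  shows "pos_roots t n = rv ` Iset n \<union> shs t {1..n}"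
proof -
  have 1: "rv ` Iset n = {em a b | a b. 1 \<le> a \<and> a < b \<and> b \<le> n} \<union> {ep a b | a b. 1 \<le> a \<and> a < b \<and> b \<le> n}"
    unfolding Iset_def rv_def by (auto simp: image_iff split: if_splits) (metis (full_types))+
  have 2: "short_roots t n = shs t {1..n}"
    using assms unfolding short_roots_def shs_def by (cases t) auto
  show ?thesis unfolding pos_roots_def 1 2 em_lam ep_lam by blast
qed

lemma rv_inj: "inj_on rv (Iset n)"
  unfolding inj_on_def Iset_def rv_def
  by (auto simp: em_eq_iff ep_eq_iff em_ne_ep split: if_splits)

lemma rv_ne_eps: "x \<in> Iset n \<Longrightarrow> rv x \<noteq> eps c"
  unfolding Iset_def rv_def by (auto simp: eps_ne_em eps_ne_ep split: if_splits)

lemma rv_apply: "rv (a, b, s) = (\<lambda>k. eps a k + (if s then 1 else -1) * eps b k)"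
  by (simp add: rv_def fun_eq_iff)



lemma mem_R2:
  fixes P :: "nat \<Rightarrow> nat \<Rightarrow> bool"
  assumes uv: "u \<noteq> v" and x: "x = 1 \<or> x = -1" and y: "y = 1 \<or> y = -1"
  shows "(\<lambda>k. x * eps u k + y * eps v k) \<in> rv ` {(a, b, s). a < b \<and> P a b} \<union> shs t T
     \<longleftrightarrow> (u < v \<and> x = 1 \<and> P u v) \<or> (v < u \<and> y = 1 \<and> P v u)" (is "?W \<in> ?R \<longleftrightarrow> ?rhs")
proof
  assume "?W \<in> ?R"
  then consider (r) a b s where "a < b" "P a b" "?W = rv (a, b, s)" | (e) c where "?W = eps c"
    unfolding shs_def by (auto split: if_splits)
  then show ?rhs
  proof cases
    case r
    from fun_cong[OF r(3), of u] fun_cong[OF r(3), of v] fun_cong[OF r(3), of a] fun_cong[OF r(3), of b]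
    show ?thesis using r(1,2) uv x y unfolding rv_apply by (auto split: if_splits)
  next
    case e
    from fun_cong[OF e, of u] fun_cong[OF e, of v]
    show ?thesis using uv x y by (auto split: if_splits)
  qed
next
  assume ?rhs
  then show "?W \<in> ?R"
  proof
    assume h: "u < v \<and> x = 1 \<and> P u v"
    have "?W = rv (u, v, y = 1)" using h y unfolding rv_apply by (auto simp: fun_eq_iff)
    then show ?thesis using h by auto
  next
    assume h: "v < u \<and> y = 1 \<and> P v u"
    have "?W = rv (v, u, x = 1)" using h x unfolding rv_apply by (auto simp: fun_eq_iff)
    then show ?thesis using h by auto
  qed
qed

lemma mem_R1:
  fixes P :: "nat \<Rightarrow> nat \<Rightarrow> bool"
  assumes x: "x = 1 \<or> x = -1"
  shows "(\<lambda>k. x * eps u k) \<in> rv ` {(a, b, s). a < b \<and> P a b} \<union> shs t T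
     \<longleftrightarrow> x = 1 \<and> t = TypeB \<and> u \<in> T" (is "?W \<in> ?R \<longleftrightarrow> ?rhs")
proof
  assume "?W \<in> ?R"
  then consider (r) a b s where "a < b" "P a b" "?W = rv (a, b, s)" | (e) c where "t = TypeB" "c \<in> T" "?W = eps c"
    unfolding shs_def by (auto split: if_splits)
  then show ?rhs
  proof cases
    case r
    from fun_cong[OF r(3), of a] fun_cong[OF r(3), of b]
    show ?thesis using r(1,2) x unfolding rv_apply by (auto split: if_splits)
  next
    case e
    from fun_cong[OF e(3), of u]
    show ?thesis using e x by (auto split: if_splits)
  qed
next
  assume h: ?rhs
  then have "?W = eps u" by (auto simp: fun_eq_iff)
  then show "?W \<in> ?R" using h unfolding shs_def by auto
qed



lemma inner_eps_right: "inner_n n v (eps a) = (if 1 \<le> a \<and> a \<le> n then v a else 0)"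
  by (simp add: inner_comm[of n v] inner_eps_left)
lemma inner_em_right: "inner_n n v (em a b) = inner_n n v (eps a) - inner_n n v (eps b)"
  by (simp add: inner_comm[of n v] inner_em_left)
lemma inner_ep_right: "inner_n n v (ep a b) = inner_n n v (eps a) + inner_n n v (eps b)"
  by (simp add: inner_comm[of n v] inner_ep_left)
lemmas inner_all = inner_em_left inner_ep_left inner_eps_left inner_em_right inner_ep_right inner_eps_right

locale rs =
  fixes t :: rtype and n :: nat and D :: "(nat \<Rightarrow> real) set"
  assumes tnC: "t \<noteq> TypeC" and DPhi: "D \<subseteq> pos_roots t n" and orth: "orthogonal_set n D"
begin

lemma fin_pos: "finite (pos_roots t n)"
proof -
  have "Iset n \<subseteq> {1..n} \<times> {1..n} \<times> UNIV" unfolding Iset_def by auto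
  then have "finite (Iset n)" by (rule finite_subset) auto
  then show ?thesis unfolding pos_roots_rv[OF tnC] shs_def by auto
qed

lemma finD: "finite D" using finite_subset[OF DPhi fin_pos] .

lemma root_cases:
  assumes "\<beta> \<in> pos_roots t n"
  obtains (r) a b s where "1 \<le> a" "a < b" "b \<le> n" "\<beta> = rv (a, b, s)"
    | (e) a where "t = TypeB" "1 \<le> a" "a \<le> n" "\<beta> = eps a"
  using assms unfolding pos_roots_rv[OF tnC] Iset_def shs_def by (auto split: if_splits)

lemma norm_pos: assumes "\<beta> \<in> pos_roots t n" shows "inner_n n \<beta> \<beta> = (if t = TypeB \<and> (\<exists>a. \<beta> = eps a) then 1 else 2)"
  using assms
proof (cases rule: root_cases)
  case (r a b s)
  have "\<not> (\<exists>c. \<beta> = eps c)" using r rv_ne_eps[of "(a, b, s)" n] unfolding Iset_def by auto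
  moreover have "inner_n n \<beta> \<beta> = 2" using r by (cases s) (simp_all add: rv_def inner_all)
  ultimately show ?thesis by simp
next
  case (e a)
  then show ?thesis by (auto simp: inner_all)
qed

lemma norm_nz: "\<beta> \<in> pos_roots t n \<Longrightarrow> inner_n n \<beta> \<beta> \<noteq> 0"
  using norm_pos by simp

lemma root_at:
  assumes "\<beta> \<in> pos_roots t n" "\<beta> m \<noteq> 0"
  shows "(\<exists>b. 1 \<le> m \<and> m < b \<and> b \<le> n \<and> (\<beta> = em m b \<or> \<beta> = ep m b))
       \<or> (\<exists>a. 1 \<le> a \<and> a < m \<and> m \<le> n \<and> (\<beta> = em a m \<or> \<beta> = ep a m))
       \<or> (t = TypeB \<and> 1 \<le> m \<and> m \<le> n \<and> \<beta> = eps m)"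
  using assms(1)
proof (cases rule: root_cases)
  case (r a b s)
  have "m = a \<or> m = b" using assms(2) r(2,4) by (auto simp: rv_def split: if_splits)
  then show ?thesis
  proof
    assume "m = a" then show ?thesis using r by (cases s) (auto simp: rv_def)
  next
    assume "m = b" then show ?thesis using r by (cases s) (auto simp: rv_def)
  qed
next
  case (e a)
  then have "m = a" using assms(2) by (auto split: if_splits)
  then show ?thesis using e by simp
qed

lemma pair:
  assumes "\<beta> \<in> pos_roots t n" "\<gamma> \<in> pos_roots t n" "\<beta> \<noteq> \<gamma>" "\<beta> m \<noteq> 0" "\<gamma> m \<noteq> 0"
    "inner_n n \<beta> \<gamma> = 0"
  shows "\<exists>a b. 1 \<le> a \<and> a < b \<and> b \<le> n \<and> (m = a \<or> m = b) \<and>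
           ((\<beta> = em a b \<and> \<gamma> = ep a b) \<or> (\<beta> = ep a b \<and> \<gamma> = em a b))"
  using root_at[OF assms(1,4)] root_at[OF assms(2,5)] assms(3,6)
  by (auto simp: inner_all split: if_splits) blast+

end


context rs begin

definition Dm :: "nat \<Rightarrow> (nat \<Rightarrow> real) set" where "Dm m = {\<beta>\<in>D. \<beta> m \<noteq> 0}"

lemma orthD: "\<beta> \<in> D \<Longrightarrow> \<gamma> \<in> D \<Longrightarrow> \<beta> \<noteq> \<gamma> \<Longrightarrow> inner_n n \<beta> \<gamma> = 0"
  using orth unfolding orthogonal_set_def by auto

lemma Dm_cases:
  "Dm m = {} \<or> (\<exists>\<beta>. Dm m = {\<beta>}) \<or>
   (\<exists>a b. 1 \<le> a \<and> a < b \<and> b \<le> n \<and> (m = a \<or> m = b) \<and> Dm m = {em a b, ep a b})"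
proof -
  consider "Dm m = {}" | \<beta> where "\<beta> \<in> Dm m" "Dm m \<subseteq> {\<beta>}" | \<beta> \<gamma> where "\<beta> \<in> Dm m" "\<gamma> \<in> Dm m" "\<beta> \<noteq> \<gamma>"
    by blast
  then show ?thesis
  proof cases
    case 2 then show ?thesis by blast
  next
    case 3
    have bD: "\<beta> \<in> D" "\<beta> m \<noteq> 0" "\<gamma> \<in> D" "\<gamma> m \<noteq> 0" using 3 unfolding Dm_def by auto
    obtain a b where ab: "1 \<le> a" "a < b" "b \<le> n" "m = a \<or> m = b"
      "(\<beta> = em a b \<and> \<gamma> = ep a b) \<or> (\<beta> = ep a b \<and> \<gamma> = em a b)"
      using pair[of \<beta> \<gamma> m] bD 3(3) orthD DPhi by blast
    have "Dm m \<subseteq> {em a b, ep a b}"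
    proof
      fix \<delta> assume d: "\<delta> \<in> Dm m"
      show "\<delta> \<in> {em a b, ep a b}"
      proof (cases "\<delta> = \<beta>")
        case True then show ?thesis using ab by auto
      next
        case False
        have dD: "\<delta> \<in> D" "\<delta> m \<noteq> 0" using d unfolding Dm_def by auto
        obtain a' b' where ab': "1 \<le> a'" "a' < b'" "b' \<le> n"
          "(\<beta> = em a' b' \<and> \<delta> = ep a' b') \<or> (\<beta> = ep a' b' \<and> \<delta> = em a' b')"
          using pair[of \<beta> \<delta> m] bD dD False orthD DPhi by blast
        show ?thesis using ab ab' by (auto simp: em_eq_iff ep_eq_iff em_ne_ep)
      qed
    qed
    moreover have "{em a b, ep a b} \<subseteq> Dm m" using ab 3 by auto
    ultimately show ?thesis using ab by blast
  qed simp
qed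

lemma sig_eps:
  assumes "1 \<le> m" "m \<le> n"
  shows "sig n D (eps m) = (\<lambda>k. eps m k - (\<Sum>\<beta>\<in>Dm m. 2 * \<beta> m / inner_n n \<beta> \<beta> * \<beta> k))"
proof -
  have "(\<Sum>\<beta>\<in>Dm m. 2 * \<beta> m / inner_n n \<beta> \<beta> * \<beta> k) = (\<Sum>\<beta>\<in>D. 2 * \<beta> m / inner_n n \<beta> \<beta> * \<beta> k)" for k
    unfolding Dm_def using finD by (subst sum.inter_filter) (auto intro: sum.cong)
  then show ?thesis unfolding sig_def using assms by (simp add: inner_eps_left)
qed

lemma sig_eps_cases:
  assumes m: "1 \<le> m" "m \<le> n"
  shows "(Dm m = {} \<and> sig n D (eps m) = (\<lambda>k. 1 * eps m k)) \<or>
 (t = TypeB \<and> Dm m = {eps m} \<and> sig n D (eps m) = (\<lambda>k. -1 * eps m k)) \<or>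
 (\<exists>b. m < b \<and> b \<le> n \<and> Dm m = {em m b} \<and> sig n D (eps m) = (\<lambda>k. 1 * eps b k)) \<or>
 (\<exists>a. 1 \<le> a \<and> a < m \<and> Dm m = {em a m} \<and> sig n D (eps m) = (\<lambda>k. 1 * eps a k)) \<or>
 (\<exists>b. m < b \<and> b \<le> n \<and> Dm m = {ep m b} \<and> sig n D (eps m) = (\<lambda>k. -1 * eps b k)) \<or>
 (\<exists>a. 1 \<le> a \<and> a < m \<and> Dm m = {ep a m} \<and> sig n D (eps m) = (\<lambda>k. -1 * eps a k)) \<or>
 (\<exists>b. m < b \<and> b \<le> n \<and> Dm m = {em m b, ep m b} \<and> sig n D (eps m) = (\<lambda>k. -1 * eps m k)) \<or>
 (\<exists>a. 1 \<le> a \<and> a < m \<and> Dm m = {em a m, ep a m} \<and> sig n D (eps m) = (\<lambda>k. -1 * eps m k))"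
proof -
  note se = sig_eps[OF m]
  consider "Dm m = {}" | \<beta> where "Dm m = {\<beta>}"
    | a b where "1 \<le> a" "a < b" "b \<le> n" "m = a \<or> m = b" "Dm m = {em a b, ep a b}"
    using Dm_cases by blast
  then show ?thesis
  proof cases
    case 1 then show ?thesis using se by simp
  next
    case 2
    then have b: "\<beta> \<in> pos_roots t n" "\<beta> m \<noteq> 0" using DPhi unfolding Dm_def by auto
    have ss: "sig n D (eps m) = (\<lambda>k. eps m k - 2 * \<beta> m / inner_n n \<beta> \<beta> * \<beta> k)"
      using se 2 by simp
    from root_at[OF b] consider
      (c1) b' where "1 \<le> m" "m < b'" "b' \<le> n" "\<beta> = em m b' \<or> \<beta> = ep m b'"
    | (c2) a' where "1 \<le> a'" "a' < m" "m \<le> n" "\<beta> = em a' m \<or> \<beta> = ep a' m"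
    | (c3) "t = TypeB" "1 \<le> m" "m \<le> n" "\<beta> = eps m" by blast
    then show ?thesis
    proof cases
      case c1
      note h = c1
      from h(4) show ?thesis
      proof
        assume "\<beta> = em m b'"
        have sv: "sig n D (eps m) = (\<lambda>k. 1 * eps b' k)" unfolding ss \<open>\<beta> = em m b'\<close> using h(1-3) by (simp add: inner_all fun_eq_iff)
        show ?thesis apply (rule disjI2, rule disjI2, rule disjI1, rule exI[of _ b']) using sv 2 h(1-3) \<open>\<beta> = em m b'\<close> by simp
      next
        assume "\<beta> = ep m b'"
        have sv: "sig n D (eps m) = (\<lambda>k. -1 * eps b' k)" unfolding ss \<open>\<beta> = ep m b'\<close> using h(1-3) by (simp add: inner_all fun_eq_iff)
        show ?thesis apply (rule disjI2, rule disjI2, rule disjI2, rule disjI2, rule disjI1, rule exI[of _ b']) using sv 2 h(1-3) \<open>\<beta> = ep m b'\<close> by simp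
      qed
    next
      case c2
      note h = c2
      from h(4) show ?thesis
      proof
        assume "\<beta> = em a' m"
        have sv: "sig n D (eps m) = (\<lambda>k. 1 * eps a' k)" unfolding ss \<open>\<beta> = em a' m\<close> using h(1-3) by (simp add: inner_all fun_eq_iff)
        show ?thesis apply (rule disjI2, rule disjI2, rule disjI2, rule disjI1, rule exI[of _ a']) using sv 2 h(1-3) \<open>\<beta> = em a' m\<close> by simp
      next
        assume "\<beta> = ep a' m"
        have sv: "sig n D (eps m) = (\<lambda>k. -1 * eps a' k)" unfolding ss \<open>\<beta> = ep a' m\<close> using h(1-3) by (simp add: inner_all fun_eq_iff)
        show ?thesis apply (rule disjI2, rule disjI2, rule disjI2, rule disjI2, rule disjI2, rule disjI1, rule exI[of _ a']) using sv 2 h(1-3) \<open>\<beta> = ep a' m\<close> by simp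
      qed
    next
      case c3
      note h = c3
      have sv: "sig n D (eps m) = (\<lambda>k. -1 * eps m k)" unfolding ss \<open>\<beta> = eps m\<close> using h(1-3) by (simp add: inner_all fun_eq_iff)
      show ?thesis apply (rule disjI2, rule disjI1) using sv 2 h by simp
    qed
  next
    case 3
    have ne: "em a b \<noteq> ep a b" using 3 em_ne_ep by simp
    have ss: "sig n D (eps m) = (\<lambda>k. eps m k - 2 * em a b m / inner_n n (em a b) (em a b) * em a b k
                - 2 * ep a b m / inner_n n (ep a b) (ep a b) * ep a b k)"
      using se 3 ne by (simp add: fun_eq_iff)
    from 3(4) show ?thesis
    proof
      assume "m = a"
      have sv: "sig n D (eps m) = (\<lambda>k. -1 * eps m k)" unfolding ss using 3(1-3) \<open>m = a\<close> by (simp add: inner_all fun_eq_iff)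
      show ?thesis apply (rule disjI2, rule disjI2, rule disjI2, rule disjI2, rule disjI2, rule disjI2, rule disjI1, rule exI[of _ b]) using sv 3(1-3,5) \<open>m = a\<close> by auto
    next
      assume "m = b"
      have sv: "sig n D (eps m) = (\<lambda>k. -1 * eps m k)" unfolding ss using 3(1-3) \<open>m = b\<close> by (simp add: inner_all fun_eq_iff)
      show ?thesis apply (rule disjI2, rule disjI2, rule disjI2, rule disjI2, rule disjI2, rule disjI2, rule disjI2, rule exI[of _ a]) using sv 3(1-3,5) \<open>m = b\<close> by auto
    qed
  qed
qed

end


lemma scal_eps_unique:
  assumes "(\<lambda>k. x * eps u k) = (\<lambda>k. y * eps v k)" "x \<noteq> 0"
  shows "u = v \<and> x = y"
proof -
  from fun_cong[OF assms(1), of u] have "x = y * eps v u" by simp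
  then show ?thesis using assms(2) by (auto split: if_splits)
qed

lemma ex_from: "s = (\<lambda>k. c * eps m' k) \<Longrightarrow> 1 \<le> m' \<Longrightarrow> m' \<le> n \<Longrightarrow> c = 1 \<or> c = -1 \<Longrightarrow>
   \<exists>m' c. 1 \<le> m' \<and> m' \<le> n \<and> (c = 1 \<or> c = -1) \<and> s = (\<lambda>k. c * eps m' k)"
  by blast

context rs begin

lemma pc_ex:
  assumes m: "1 \<le> m" "m \<le> n"
  shows "\<exists>m' c. 1 \<le> m' \<and> m' \<le> n \<and> (c = 1 \<or> c = -1) \<and> sig n D (eps m) = (\<lambda>k. c * eps m' k)"
  using sig_eps_cases[OF m] m by (elim disjE exE conjE) (erule ex_from; auto)+

definition pc :: "nat \<Rightarrow> nat \<times> real" where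
  "pc m = (SOME x. 1 \<le> fst x \<and> fst x \<le> n \<and> (snd x = 1 \<or> snd x = -1) \<and> sig n D (eps m) = (\<lambda>k. snd x * eps (fst x) k))"

definition p :: "nat \<Rightarrow> nat" where "p m = fst (pc m)"
definition cs :: "nat \<Rightarrow> real" where "cs m = snd (pc m)"

lemma pc_prop:
  assumes m: "1 \<le> m" "m \<le> n"
  shows "1 \<le> p m \<and> p m \<le> n \<and> (cs m = 1 \<or> cs m = -1) \<and> sig n D (eps m) = (\<lambda>k. cs m * eps (p m) k)"
proof -
  obtain m' c where h: "1 \<le> m' \<and> m' \<le> n \<and> (c = 1 \<or> c = -1) \<and> sig n D (eps m) = (\<lambda>k. c * eps m' k)"
    using pc_ex[OF m] by blast
  have "\<exists>x. 1 \<le> fst x \<and> fst x \<le> n \<and> (snd x = 1 \<or> snd x = -1) \<and> sig n D (eps m) = (\<lambda>k. snd x * eps (fst x) k)"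
    by (rule exI[of _ "(m', c)"]) (use h in simp)
  from someI_ex[OF this] show ?thesis unfolding p_def cs_def pc_def .
qed

lemma cs_nz: "1 \<le> m \<Longrightarrow> m \<le> n \<Longrightarrow> cs m \<noteq> 0"
  using pc_prop by force

lemma pc_eq:
  assumes m: "1 \<le> m" "m \<le> n" and h: "sig n D (eps m) = (\<lambda>k. x * eps u k)" "x \<noteq> 0"
  shows "p m = u \<and> cs m = x"
  using scal_eps_unique[of "cs m" "p m" x u] pc_prop[OF m] h cs_nz[OF m] by auto

lemma sig_invol_D: "sig n D (sig n D v) = v"
  by (rule sig_invol[OF finD orth]) (use norm_nz DPhi in blast)

lemma p_invol:
  assumes m: "1 \<le> m" "m \<le> n"
  shows "p (p m) = m \<and> cs (p m) = cs m"
proof -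
  have pm: "1 \<le> p m" "p m \<le> n" using pc_prop[OF m] by auto
  have e1: "sig n D (eps m) = (\<lambda>k. cs m * eps (p m) k)" using pc_prop[OF m] by blast
  have e2: "sig n D (eps (p m)) = (\<lambda>k. cs (p m) * eps (p (p m)) k)" using pc_prop[OF pm] by blast
  have "eps m = sig n D (sig n D (eps m))" by (simp add: sig_invol_D)
  also have "\<dots> = sig n D (\<lambda>k. cs m * eps (p m) k)" by (simp only: e1)
  also have "\<dots> = (\<lambda>k. cs m * sig n D (eps (p m)) k)" by (rule sig_scale)
  also have "\<dots> = (\<lambda>k. (cs m * cs (p m)) * eps (p (p m)) k)"
    by (simp only: e2 mult.assoc)
  finally have "(\<lambda>k. 1 * eps m k) = (\<lambda>k. (cs m * cs (p m)) * eps (p (p m)) k)" by simp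
  from scal_eps_unique[OF this] have "m = p (p m)" "1 = cs m * cs (p m)" by auto
  moreover have "cs m = 1 \<or> cs m = -1" "cs (p m) = 1 \<or> cs (p m) = -1" using pc_prop[OF m] pc_prop[OF pm] by auto
  ultimately show ?thesis by auto
qed

lemma p_inj: "1 \<le> a \<Longrightarrow> a \<le> n \<Longrightarrow> 1 \<le> b \<Longrightarrow> b \<le> n \<Longrightarrow> p a = p b \<Longrightarrow> a = b"
  by (metis p_invol)

lemma pair_Dm:
  assumes ab: "1 \<le> a" "a < b" "b \<le> n" and D: "em a b \<in> D" "ep a b \<in> D" and m: "m = a \<or> m = b"
  shows "Dm m = {em a b, ep a b}" "sig n D (eps m) = (\<lambda>k. -1 * eps m k)"
proof -
  have in1: "em a b \<in> Dm m" "ep a b \<in> Dm m" using D m ab unfolding Dm_def by auto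
  have ne: "em a b \<noteq> ep a b" using ab em_ne_ep by simp
  from Dm_cases[of m] show dm: "Dm m = {em a b, ep a b}"
  proof (elim disjE exE conjE)
    assume "Dm m = {}" then show ?thesis using in1 by simp
  next
    fix \<beta> assume "Dm m = {\<beta>}" then show ?thesis using in1 ne by simp
  next
    fix a' b' assume h: "1 \<le> a'" "a' < b'" "b' \<le> n" "Dm m = {em a' b', ep a' b'}"
    then have "em a b \<in> {em a' b', ep a' b'}" using in1 by simp
    then have "a = a' \<and> b = b'" using ab h(2) by (auto simp: em_eq_iff em_ne_ep)
    then show ?thesis using h by simp
  next
    fix a' b' assume h: "1 \<le> a'" "a' < b'" "b' \<le> n" "Dm m = {em a' b', ep a' b'}"
    then have "em a b \<in> {em a' b', ep a' b'}" using in1 by simp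
    then have "a = a' \<and> b = b'" using ab h(2) by (auto simp: em_eq_iff em_ne_ep)
    then show ?thesis using h by simp
  qed
  have m1: "1 \<le> m" "m \<le> n" using m ab by auto
  show "sig n D (eps m) = (\<lambda>k. -1 * eps m k)"
    unfolding sig_eps[OF m1] dm using ne m ab by (auto simp: inner_all fun_eq_iff)
qed

end


lemma col_em: assumes "a < b" shows "col (em a b) = a"
proof -
  have c: "\<exists>i j. i < j \<and> (em a b = em i j \<or> em a b = ep i j)" using assms by blast
  have "(SOME i. \<exists>j. i < j \<and> (em a b = em i j \<or> em a b = ep i j)) = a"
    by (rule some_equality) (use assms in \<open>auto simp: em_eq_iff em_ne_ep\<close>)
  then show ?thesis unfolding col_def em_lam ep_lam using c by simp
qed

lemma col_ep: assumes "a < b" shows "col (ep a b) = a"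
proof -
  have c: "\<exists>i j. i < j \<and> (ep a b = em i j \<or> ep a b = ep i j)" using assms by blast
  have "(SOME i. \<exists>j. i < j \<and> (ep a b = em i j \<or> ep a b = ep i j)) = a"
    by (rule some_equality) (use assms in \<open>auto simp: ep_eq_iff em_ne_ep\<close>)
  then show ?thesis unfolding col_def em_lam ep_lam using c by simp
qed

lemma col_eps: "col (eps a) = a"
proof -
  have c: "\<not> (\<exists>i j. i < j \<and> (eps a = em i j \<or> eps a = ep i j))" by (auto simp: eps_ne_em eps_ne_ep)
  have "(SOME i. eps a = eps i \<or> eps a = (\<lambda>k. 2 * eps i k)) = a"
  proof (rule some_equality)
    fix i assume "eps a = eps i \<or> eps a = (\<lambda>k. 2 * eps i k)"
    then show "i = a"
    proof
      assume "eps a = (\<lambda>k. 2 * eps i k)"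
      from fun_cong[OF this, of a] show "i = a" by (auto split: if_splits)
    qed simp
  qed simp
  then show ?thesis unfolding col_def em_lam ep_lam if_not_P[OF c] by simp
qed

lemma row_em: assumes "a < b" shows "row (em a b) = int b"
proof -
  have c: "\<exists>i j. i < j \<and> em a b = em i j" using assms by blast
  have "(SOME j. \<exists>i. i < j \<and> em a b = em i j) = b"
    by (rule some_equality) (use assms in \<open>auto simp: em_eq_iff\<close>)
  then show ?thesis unfolding row_def em_lam ep_lam using c by simp
qed

lemma row_ep: assumes "a < b" shows "row (ep a b) = - int b"
proof -
  have c0: "\<not> (\<exists>i j. i < j \<and> ep a b = em i j)" using em_ne_ep by force
  have c: "\<exists>i j. i < j \<and> ep a b = ep i j" using assms by blast
  have "(SOME j. \<exists>i. i < j \<and> ep a b = ep i j) = b"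
    by (rule some_equality) (use assms in \<open>auto simp: ep_eq_iff\<close>)
  then show ?thesis unfolding row_def em_lam ep_lam if_not_P[OF c0] if_P[OF c] by simp
qed

lemma row_eps: "row (eps a) = 0"
proof -
  have c1: "\<not> (\<exists>i j. i < j \<and> eps a = em i j)" and c2: "\<not> (\<exists>i j. i < j \<and> eps a = ep i j)"
    by (auto simp: eps_ne_em eps_ne_ep)
  then show ?thesis unfolding row_def em_lam ep_lam if_not_P[OF c1] if_not_P[OF c2] by simp
qed

lemma col_rv: "a < b \<Longrightarrow> col (rv (a, b, s)) = a" by (simp add: rv_def col_em col_ep)

lemma shs_card: "finite A \<Longrightarrow> card (shs t A) = (if t = TypeB then card A else 0)"
  unfolding shs_def by (simp add: card_image inj_on_def)

lemma shs_filter: "{\<alpha> \<in> shs t A. P \<alpha>} = shs t {a\<in>A. P (eps a)}"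
  unfolding shs_def by auto

locale rsj = rs +
  fixes j :: nat
  assumes j1: "1 < j" and jn: "j \<le> n" and e1: "em 1 j \<in> D" and e2: "ep 1 j \<in> D"
begin

lemma p1: "p 1 = 1" "cs 1 = -1"
  using pc_eq[of 1 "-1" 1] pair_Dm(2)[of 1 j 1] j1 jn e1 e2 by auto

lemma pj: "p j = j" "cs j = -1"
  using pc_eq[of j "-1" j] pair_Dm(2)[of 1 j j] j1 jn e1 e2 by auto

lemma Dm1: "Dm 1 = {em 1 j, ep 1 j}" and Dmj: "Dm j = {em 1 j, ep 1 j}"
  using pair_Dm(1)[of 1 j 1] pair_Dm(1)[of 1 j j] j1 jn e1 e2 by auto

definition K :: "nat set" where "K = {m. 1 \<le> m \<and> m \<le> n \<and> m \<noteq> 1 \<and> m \<noteq> j}"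

lemma pK: assumes "m \<in> K" shows "p m \<in> K"
proof -
  have m: "1 \<le> m" "m \<le> n" "m \<noteq> 1" "m \<noteq> j" using assms unfolding K_def by auto
  have "p m \<noteq> 1" using p_invol[OF m(1,2)] p1 m(3) by metis
  moreover have "p m \<noteq> j" using p_invol[OF m(1,2)] pj m(4) by metis
  ultimately show ?thesis using pc_prop[OF m(1,2)] unfolding K_def by auto
qed

lemma Cols_eq: assumes "1 \<le> x" "x \<le> n"
  shows "Cols t n x = rv ` {y \<in> Iset n. fst y = x} \<union> shs t {x}"
proof -
  have "Cols t n x = {\<alpha> \<in> rv ` Iset n. col \<alpha> = x} \<union> {\<alpha> \<in> shs t {1..n}. col \<alpha> = x}"
    unfolding Cols_def pos_roots_rv[OF tnC] by auto
  also have "{\<alpha> \<in> rv ` Iset n. col \<alpha> = x} = rv ` {y \<in> Iset n. fst y = x}"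
    by (auto simp: Iset_def col_rv)
  also have "{\<alpha> \<in> shs t {1..n}. col \<alpha> = x} = shs t {x}"
  proof -
    have "{a \<in> {1..n}. col (eps a) = x} = {x}" using assms by (auto simp: col_eps)
    then show ?thesis unfolding shs_filter by simp
  qed
  finally show ?thesis .
qed

end


definition sg :: "bool \<Rightarrow> real" where "sg s = (if s then 1 else -1)"

lemma rv_sg: "rv (a, b, s) = (\<lambda>k. eps a k + sg s * eps b k)"
  by (simp add: rv_apply sg_def)

lemma Iset_P: "Iset n = {(a, b, s). a < b \<and> (1 \<le> a \<and> b \<le> n)}"
  unfolding Iset_def by auto

context rsj begin

definition Phit where
  "Phit = pos_roots t n - (Cols t n 1 \<union> Cols t n j \<union> Rows t n (int j) \<union> Rows t n (- int j))"

definition It where "It = {(a, b, s). a < b \<and> (1 \<le> a \<and> b \<le> n \<and> a \<noteq> 1 \<and> a \<noteq> j \<and> b \<noteq> j)}"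

lemma rv_Phit: assumes "(a, b, s) \<in> Iset n"
  shows "rv (a, b, s) \<in> Phit \<longleftrightarrow> a \<noteq> 1 \<and> a \<noteq> j \<and> b \<noteq> j"
proof -
  have ab: "1 \<le> a" "a < b" "b \<le> n" using assms unfolding Iset_def by auto
  have in1: "rv (a, b, s) \<in> pos_roots t n" using assms unfolding pos_roots_rv[OF tnC] by auto
  have row: "row (rv (a, b, s)) = (if s then - int b else int b)"
    using ab by (simp add: rv_def row_em row_ep)
  show ?thesis using in1 ab j1 unfolding Phit_def Cols_def Rows_def
    by (auto simp: col_rv row)
qed

lemma eps_Phit: assumes "1 \<le> a" "a \<le> n" "t = TypeB"
  shows "eps a \<in> Phit \<longleftrightarrow> a \<in> K"
proof -
  have in1: "eps a \<in> pos_roots t n" using assms unfolding pos_roots_rv[OF tnC] shs_def by auto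
  show ?thesis using in1 assms j1 unfolding Phit_def Cols_def Rows_def K_def
    by (auto simp: col_eps row_eps)
qed

lemma Phit_eq: "Phit = rv ` It \<union> shs t K"
proof
  show "Phit \<subseteq> rv ` It \<union> shs t K"
  proof
    fix \<alpha> assume a: "\<alpha> \<in> Phit"
    then have "\<alpha> \<in> pos_roots t n" unfolding Phit_def by auto
    then show "\<alpha> \<in> rv ` It \<union> shs t K"
    proof (cases rule: root_cases)
      case (r a b s)
      then have "(a, b, s) \<in> Iset n" unfolding Iset_def by auto
      then have "a \<noteq> 1 \<and> a \<noteq> j \<and> b \<noteq> j" using rv_Phit a r by auto
      then show ?thesis using r unfolding It_def by auto
    next
      case (e a)
      then show ?thesis using eps_Phit[of a] a unfolding shs_def by auto
    qed
  qed
next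
  show "rv ` It \<union> shs t K \<subseteq> Phit"
  proof
    fix \<alpha> assume "\<alpha> \<in> rv ` It \<union> shs t K"
    then consider x where "x \<in> It" "\<alpha> = rv x" | a where "t = TypeB" "a \<in> K" "\<alpha> = eps a"
      unfolding shs_def by (auto split: if_splits)
    then show "\<alpha> \<in> Phit"
    proof cases
      case 1
      then obtain a b s where x: "x = (a, b, s)" "1 \<le> a" "a < b" "b \<le> n" "a \<noteq> 1" "a \<noteq> j" "b \<noteq> j"
        unfolding It_def by auto
      then have "(a, b, s) \<in> Iset n" unfolding Iset_def by auto
      then show ?thesis using rv_Phit 1 x by auto
    next
      case 2 then show ?thesis using eps_Phit[of a] unfolding K_def by auto
    qed
  qed
qed

lemma D_notPhit: assumes "\<beta> \<in> D" "\<beta> \<notin> Phit" shows "\<beta> = em 1 j \<or> \<beta> = ep 1 j"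
proof -
  have "\<beta> \<in> pos_roots t n" using assms DPhi by auto
  then have "\<beta> 1 \<noteq> 0 \<or> \<beta> j \<noteq> 0"
  proof (cases rule: root_cases)
    case (r a b s)
    then have "(a, b, s) \<in> Iset n" unfolding Iset_def by auto
    then have "a = 1 \<or> a = j \<or> b = j" using rv_Phit assms r by auto
    then show ?thesis using r by (cases s) (auto simp: rv_def)
  next
    case (e a)
    then have "a = 1 \<or> a = j" using eps_Phit[of a] assms unfolding K_def by auto
    then show ?thesis using e by auto
  qed
  then have "\<beta> \<in> Dm 1 \<or> \<beta> \<in> Dm j" using assms unfolding Dm_def by auto
  then show ?thesis using Dm1 Dmj by auto
qed

definition Dt where "Dt = D \<inter> Phit"

lemma finDt: "finite Dt" unfolding Dt_def using finD by auto
lemma orthDt: "orthogonal_set n Dt" using orth unfolding Dt_def orthogonal_set_def by auto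

lemma sigt_eps: assumes "m \<in> K" shows "sig n Dt (eps m) = sig n D (eps m)"
proof -
  have m: "1 \<le> m" "m \<le> n" "m \<noteq> 1" "m \<noteq> j" using assms unfolding K_def by auto
  have "(\<Sum>b\<in>Dt. 2 * inner_n n (eps m) b / inner_n n b b * b k) = (\<Sum>b\<in>D. 2 * inner_n n (eps m) b / inner_n n b b * b k)" for k
  proof (rule sum.mono_neutral_left[OF finD])
    show "Dt \<subseteq> D" unfolding Dt_def by auto
    show "\<forall>i\<in>D - Dt. 2 * inner_n n (eps m) i / inner_n n i i * i k = 0"
    proof
      fix i assume "i \<in> D - Dt"
      then have "i = em 1 j \<or> i = ep 1 j" using D_notPhit unfolding Dt_def by auto
      then have "inner_n n (eps m) i = 0" using m by (auto simp: inner_all)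
      then show "2 * inner_n n (eps m) i / inner_n n i i * i k = 0" by simp
    qed
  qed
  then show ?thesis unfolding sig_def by simp
qed

definition Q :: "nat \<times> nat \<times> bool \<Rightarrow> bool" where
  "Q x = (case x of (a, b, s) \<Rightarrow> (p a < p b \<and> cs a = -1) \<or> (p b < p a \<and> sg s * cs b = -1))"

lemma sig_rv: assumes "1 \<le> a" "a < b" "b \<le> n"
  shows "sig n D (rv (a, b, s)) = (\<lambda>k. cs a * eps (p a) k + (sg s * cs b) * eps (p b) k)"
proof -
  have a: "sig n D (eps a) = (\<lambda>k. cs a * eps (p a) k)" using pc_prop[of a] assms by auto
  have b: "sig n D (eps b) = (\<lambda>k. cs b * eps (p b) k)" using pc_prop[of b] assms by auto
  show ?thesis by (cases s) (simp_all add: rv_def sig_em sig_ep a b sg_def fun_eq_iff)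
qed

end


lemma Iset_fin: "finite (Iset n)"
proof -
  have "Iset n \<subseteq> {1..n} \<times> {1..n} \<times> UNIV" unfolding Iset_def by auto
  then show ?thesis by (rule finite_subset) auto
qed

lemma card_split:
  assumes I: "I \<subseteq> Iset n" and A: "finite A"
  shows "card {\<alpha> \<in> rv ` I \<union> shs t A. P \<alpha>} = card {x \<in> I. P (rv x)} + card (shs t {a \<in> A. P (eps a)})"
proof -
  have fI: "finite I" using finite_subset[OF I Iset_fin] .
  have eq: "{\<alpha> \<in> rv ` I \<union> shs t A. P \<alpha>} = rv ` {x \<in> I. P (rv x)} \<union> shs t {a \<in> A. P (eps a)}"
    by (auto simp: shs_filter[symmetric])
  have disj: "rv ` {x \<in> I. P (rv x)} \<inter> shs t {a \<in> A. P (eps a)} = {}"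
    using rv_ne_eps I unfolding shs_def by (auto split: if_splits)
  have inj: "inj_on rv {x \<in> I. P (rv x)}" by (rule inj_on_subset[OF rv_inj[of n]]) (use I in auto)
  have f2: "finite (shs t {a \<in> A. P (eps a)})" using A unfolding shs_def by auto
  show ?thesis unfolding eq
    by (subst card_Un_disjoint) (use fI f2 disj inj card_image in auto)
qed

context rsj begin

lemma mPhi: "pos_roots t n = rv ` {(a, b, s). a < b \<and> (1 \<le> a \<and> b \<le> n)} \<union> shs t {1..n}"
  using pos_roots_rv[OF tnC] Iset_P by simp

lemma sg_pm: "sg s = 1 \<or> sg s = -1" by (simp add: sg_def)
lemma cs_pm: "1 \<le> a \<Longrightarrow> a \<le> n \<Longrightarrow> cs a = 1 \<or> cs a = -1" using pc_prop by blast
lemma p_range: "1 \<le> a \<Longrightarrow> a \<le> n \<Longrightarrow> 1 \<le> p a \<and> p a \<le> n" using pc_prop by blast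

lemma pm_mult: "x = 1 \<or> x = -1 \<Longrightarrow> y = 1 \<or> y = (-1::real) \<Longrightarrow> x * y = 1 \<or> x * y = -1" by auto
lemma pm_neg: "x = 1 \<or> x = -1 \<Longrightarrow> - x = 1 \<or> - x = (-1::real)" by auto

lemma negmem_rv: assumes x: "(a, b, s) \<in> Iset n"
  shows "(\<lambda>k. - sig n D (rv (a, b, s)) k) \<in> pos_roots t n \<longleftrightarrow> Q (a, b, s)"
proof -
  have ab: "1 \<le> a" "a < b" "b \<le> n" using x unfolding Iset_def by auto
  have eq: "(\<lambda>k. - sig n D (rv (a, b, s)) k) = (\<lambda>k. (- cs a) * eps (p a) k + (- (sg s * cs b)) * eps (p b) k)"
    unfolding sig_rv[OF ab] by (simp add: fun_eq_iff)
  have ne: "p a \<noteq> p b" using p_inj[of a b] ab by auto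
  have r: "1 \<le> p a" "p a \<le> n" "1 \<le> p b" "p b \<le> n" using p_range[of a] p_range[of b] ab by auto
  have ca: "cs a = 1 \<or> cs a = -1" "sg s * cs b = 1 \<or> sg s * cs b = -1"
    using cs_pm[of a] cs_pm[of b] ab sg_pm[of s] pm_mult by auto
  show ?thesis unfolding eq mPhi
    apply (subst mem_R2[OF ne pm_neg[OF ca(1)] pm_neg[OF ca(2)]])
    using r ne ca unfolding Q_def by auto
qed

lemma negmem_eps: assumes "1 \<le> a" "a \<le> n" "t = TypeB"
  shows "(\<lambda>k. - sig n D (eps a) k) \<in> pos_roots t n \<longleftrightarrow> cs a = -1"
proof -
  have eq: "(\<lambda>k. - sig n D (eps a) k) = (\<lambda>k. (- cs a) * eps (p a) k)"
    using pc_prop[of a] assms by (simp add: fun_eq_iff)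
  have r: "1 \<le> p a" "p a \<le> n" using p_range[of a] assms by auto
  show ?thesis unfolding eq mPhi
    apply (subst mem_R1[OF pm_neg[OF cs_pm[OF assms(1,2)]]])
    using r assms cs_pm[OF assms(1,2)] by auto
qed

lemma LHS: "weyl_length t n (sig n D) = card {x \<in> Iset n. Q x} + card (shs t {a \<in> {1..n}. cs a = -1})"
proof -
  have "weyl_length t n (sig n D) = card {x \<in> Iset n. (\<lambda>k. - sig n D (rv x) k) \<in> pos_roots t n}
      + card (shs t {a \<in> {1..n}. (\<lambda>k. - sig n D (eps a) k) \<in> pos_roots t n})"
    unfolding weyl_length_def pos_roots_rv[OF tnC, of n, symmetric]
    using card_split[of "Iset n" n "{1..n}" t "\<lambda>\<alpha>. (\<lambda>k. - sig n D \<alpha> k) \<in> pos_roots t n"]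
    by (simp add: pos_roots_rv[OF tnC])
  also have "{x \<in> Iset n. (\<lambda>k. - sig n D (rv x) k) \<in> pos_roots t n} = {x \<in> Iset n. Q x}"
    using negmem_rv by auto
  also have "shs t {a \<in> {1..n}. (\<lambda>k. - sig n D (eps a) k) \<in> pos_roots t n} = shs t {a \<in> {1..n}. cs a = -1}"
  proof (cases "t = TypeB")
    case True
    have "{a \<in> {1..n}. (\<lambda>k. - sig n D (eps a) k) \<in> pos_roots t n} = {a \<in> {1..n}. cs a = -1}"
      using negmem_eps True by auto
    then show ?thesis by simp
  qed (simp add: shs_def)
  finally show ?thesis .
qed

lemma It_sub: "It \<subseteq> Iset n" unfolding It_def Iset_def by auto

lemma sigt_rv: assumes "(a, b, s) \<in> It"
  shows "sig n Dt (rv (a, b, s)) = sig n D (rv (a, b, s))"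
proof -
  have "a \<in> K" "b \<in> K" using assms unfolding It_def K_def by auto
  then show ?thesis by (cases s) (simp_all add: rv_def sig_em sig_ep sigt_eps)
qed

lemma tmem_rv: assumes x: "(a, b, s) \<in> It"
  shows "sig n Dt (rv (a, b, s)) \<notin> Phit \<longleftrightarrow> Q (a, b, s)"
proof -
  have ab: "1 \<le> a" "a < b" "b \<le> n" and K: "a \<in> K" "b \<in> K" using x unfolding It_def K_def by auto
  have eq: "sig n Dt (rv (a, b, s)) = (\<lambda>k. cs a * eps (p a) k + (sg s * cs b) * eps (p b) k)"
    unfolding sigt_rv[OF x] sig_rv[OF ab] ..
  have ne: "p a \<noteq> p b" using p_inj[of a b] ab by auto
  have r: "p a \<in> K" "p b \<in> K" using pK K by auto
  have ca: "cs a = 1 \<or> cs a = -1" "sg s * cs b = 1 \<or> sg s * cs b = -1"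
    using cs_pm[of a] cs_pm[of b] ab sg_pm[of s] pm_mult by auto
  show ?thesis unfolding eq Phit_eq It_def
    apply (subst mem_R2[OF ne ca])
    using r ne ca unfolding Q_def K_def by auto
qed

lemma tmem_eps: assumes "a \<in> K" "t = TypeB"
  shows "sig n Dt (eps a) \<notin> Phit \<longleftrightarrow> cs a = -1"
proof -
  have a: "1 \<le> a" "a \<le> n" using assms unfolding K_def by auto
  have eq: "sig n Dt (eps a) = (\<lambda>k. cs a * eps (p a) k)"
    using pc_prop[OF a] sigt_eps[OF assms(1)] by simp
  have r: "p a \<in> K" using pK assms by auto
  show ?thesis unfolding eq Phit_eq It_def
    apply (subst mem_R1[OF cs_pm[OF a]])
    using r assms cs_pm[OF a] by auto
qed

lemma finK: "finite K" unfolding K_def by auto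

lemma lprime: "card {\<alpha> \<in> Phit. sig n Dt \<alpha> \<notin> Phit} = card {x \<in> It. Q x} + card (shs t {a \<in> K. cs a = -1})"
proof -
  have "card {\<alpha> \<in> Phit. sig n Dt \<alpha> \<notin> Phit} = card {x \<in> It. sig n Dt (rv x) \<notin> Phit}
      + card (shs t {a \<in> K. sig n Dt (eps a) \<notin> Phit})"
    unfolding Phit_eq[symmetric]
    using card_split[OF It_sub finK, of t "\<lambda>\<alpha>. sig n Dt \<alpha> \<notin> Phit"]
    by (simp add: Phit_eq)
  also have "{x \<in> It. sig n Dt (rv x) \<notin> Phit} = {x \<in> It. Q x}"
    using tmem_rv by auto
  also have "shs t {a \<in> K. sig n Dt (eps a) \<notin> Phit} = shs t {a \<in> K. cs a = -1}"
  proof (cases "t = TypeB")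
    case True
    have "{a \<in> K. sig n Dt (eps a) \<notin> Phit} = {a \<in> K. cs a = -1}"
      using tmem_eps True by auto
    then show ?thesis by simp
  qed (simp add: shs_def)
  finally show ?thesis .
qed

lemma card_Cols: assumes "1 \<le> x" "x \<le> n"
  shows "card (Cols t n x) = card {y \<in> Iset n. fst y = x} + card (shs t {x})"
  using card_split[of "{y \<in> Iset n. fst y = x}" n "{x}" t "\<lambda>_. True"]
  unfolding Cols_eq[OF assms] by (simp add: Un_def)

end


context rsj begin

definition "E = {i. 1 < i \<and> i < j \<and> p i < j \<and> cs i = -1}"

lemma Q1: assumes "(1, b, s) \<in> Iset n" shows "Q (1, b, s)"
proof -
  have b: "1 < b" "b \<le> n" using assms unfolding Iset_def by auto
  have "p b \<noteq> 1" using p_inj[of b 1] p1 b by auto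
  moreover have "1 \<le> p b" using p_range[of b] b by auto
  ultimately show ?thesis unfolding Q_def using p1 by auto
qed

lemma pne: "1 \<le> a \<Longrightarrow> a \<le> n \<Longrightarrow> 1 \<le> b \<Longrightarrow> b \<le> n \<Longrightarrow> a \<noteq> b \<Longrightarrow> p a \<noteq> p b"
  using p_inj by blast

lemma cardQ: "card {x \<in> Iset n. Q x} = card {x \<in> It. Q x} + card {y \<in> Iset n. fst y = 1}
   + card {y \<in> Iset n. fst y = j} + 2 * card E"
proof -
  define I1 where "I1 = {y \<in> Iset n. fst y = 1}"
  define Ic where "Ic = {y \<in> Iset n. fst y = j}"
  define Ir where "Ir = {y \<in> Iset n. fst y \<noteq> 1 \<and> fst (snd y) = j}"
  define A where "A = {b. j < b \<and> b \<le> n \<and> p b < j}"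
  define B where "B = {i. 1 < i \<and> i < j \<and> j < p i}"
  have fin: "finite X" if "X \<subseteq> Iset n" for X using finite_subset[OF that Iset_fin] .
  have finN: "finite X" if "X \<subseteq> {..n}" for X using finite_subset[OF that] by auto
  have split: "{x \<in> Iset n. Q x} = (({x \<in> It. Q x} \<union> I1) \<union> {x \<in> Ic. Q x}) \<union> {x \<in> Ir. Q x}"
  proof
    show "{x \<in> Iset n. Q x} \<subseteq> (({x \<in> It. Q x} \<union> I1) \<union> {x \<in> Ic. Q x}) \<union> {x \<in> Ir. Q x}"
      unfolding I1_def Ic_def Ir_def It_def Iset_def by auto
    show "(({x \<in> It. Q x} \<union> I1) \<union> {x \<in> Ic. Q x}) \<union> {x \<in> Ir. Q x} \<subseteq> {x \<in> Iset n. Q x}"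
      using It_sub Q1 unfolding I1_def Ic_def Ir_def by auto
  qed
  have c1: "card {x \<in> Iset n. Q x} = card {x \<in> It. Q x} + card I1 + card {x \<in> Ic. Q x} + card {x \<in> Ir. Q x}"
    unfolding split
    apply (subst card_Un_disjoint)
       apply (rule fin, use It_sub in \<open>auto simp: I1_def Ic_def\<close>)[1]
      apply (rule fin, auto simp: Ir_def)[1]
     apply (use j1 in \<open>auto simp: I1_def Ic_def Ir_def It_def Iset_def\<close>)[1]
    apply (subst card_Un_disjoint)
       apply (rule fin, use It_sub in \<open>auto simp: I1_def\<close>)[1]
      apply (rule fin, auto simp: Ic_def)[1]
     apply (use j1 in \<open>auto simp: I1_def Ic_def It_def Iset_def\<close>)[1]
    apply (subst card_Un_disjoint)
       apply (rule fin, use It_sub in \<open>auto\<close>)[1]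
      apply (rule fin, auto simp: I1_def)[1]
     apply (auto simp: I1_def It_def Iset_def)[1]
    by simp
  have Ic_split: "Ic = {x \<in> Ic. Q x} \<union> (\<lambda>b. (j, b, cs b = 1)) ` A"
  proof
    show "Ic \<subseteq> {x \<in> Ic. Q x} \<union> (\<lambda>b. (j, b, cs b = 1)) ` A"
    proof
      fix y assume y: "y \<in> Ic"
      then obtain b s where yy: "y = (j, b, s)" "j < b" "b \<le> n" unfolding Ic_def Iset_def by auto
      have pb: "p b \<noteq> j" using pne[of b j] pj yy j1 jn by auto
      have cb: "cs b = 1 \<or> cs b = -1" using cs_pm[of b] yy j1 by auto
      show "y \<in> {x \<in> Ic. Q x} \<union> (\<lambda>b. (j, b, cs b = 1)) ` A"
      proof (cases "Q y")
        case False
        then have "p b < j" "s = (cs b = 1)" using pb cb yy pj unfolding Q_def sg_def by (auto split: if_splits)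
        then show ?thesis using yy unfolding A_def by auto
      qed (use y in auto)
    qed
    show "{x \<in> Ic. Q x} \<union> (\<lambda>b. (j, b, cs b = 1)) ` A \<subseteq> Ic"
      unfolding Ic_def A_def Iset_def using j1 by auto
  qed
  have Ic_disj: "{x \<in> Ic. Q x} \<inter> (\<lambda>b. (j, b, cs b = 1)) ` A = {}"
  proof -
    have "\<not> Q (j, b, cs b = 1)" if "b \<in> A" for b
    proof -
      have cb: "cs b = 1 \<or> cs b = -1" using cs_pm[of b] that j1 unfolding A_def by auto
      show ?thesis using that cb pj unfolding A_def Q_def sg_def by auto
    qed
    then show ?thesis by auto
  qed
  have cA: "card {x \<in> Ic. Q x} + card A = card Ic"
  proof -
    have "card Ic = card {x \<in> Ic. Q x} + card ((\<lambda>b. (j, b, cs b = 1)) ` A)"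
      apply (subst Ic_split)
      apply (rule card_Un_disjoint)
      using Ic_disj by (auto intro!: fin finN simp: Ic_def A_def)
    also have "card ((\<lambda>b. (j, b, cs b = 1)) ` A) = card A"
      by (rule card_image) (auto simp: inj_on_def)
    finally show ?thesis by simp
  qed
  have Ir_eq: "{x \<in> Ir. Q x} = (\<lambda>i. (i, j, True)) ` B \<union> (\<lambda>(i, s). (i, j, s)) ` (E \<times> UNIV)"
  proof
    show "{x \<in> Ir. Q x} \<subseteq> (\<lambda>i. (i, j, True)) ` B \<union> (\<lambda>(i, s). (i, j, s)) ` (E \<times> UNIV)"
    proof
      fix y assume y: "y \<in> {x \<in> Ir. Q x}"
      then obtain i s where yy: "y = (i, j, s)" "1 < i" "i < j" "Q (i, j, s)" unfolding Ir_def Iset_def by auto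
      have pi: "p i \<noteq> j" using pne[of i j] pj yy jn by auto
      show "y \<in> (\<lambda>i. (i, j, True)) ` B \<union> (\<lambda>(i, s). (i, j, s)) ` (E \<times> UNIV)"
      proof (cases "p i < j")
        case True
        then have "cs i = -1" using yy pj unfolding Q_def by auto
        then have "i \<in> E" using True yy unfolding E_def by auto
        then show ?thesis using yy by auto
      next
        case False
        then have "j < p i" using pi by auto
        then have "s" using yy pj unfolding Q_def sg_def by (auto split: if_splits)
        then show ?thesis using yy \<open>j < p i\<close> unfolding B_def by auto
      qed
    qed
    show "(\<lambda>i. (i, j, True)) ` B \<union> (\<lambda>(i, s). (i, j, s)) ` (E \<times> UNIV) \<subseteq> {x \<in> Ir. Q x}"
    proof
      fix y assume "y \<in> (\<lambda>i. (i, j, True)) ` B \<union> (\<lambda>(i, s). (i, j, s)) ` (E \<times> UNIV)"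
      then consider i where "i \<in> B" "y = (i, j, True)" | i s where "i \<in> E" "y = (i, j, s)" by auto
      then show "y \<in> {x \<in> Ir. Q x}"
      proof cases
        case 1 then show ?thesis using pj jn unfolding B_def Ir_def Iset_def Q_def sg_def by auto
      next
        case 2 then show ?thesis using pj jn unfolding E_def Ir_def Iset_def Q_def by auto
      qed
    qed
  qed
  have cIr: "card {x \<in> Ir. Q x} = card B + 2 * card E"
  proof -
    have fB: "finite B" by (rule finN) (auto simp: B_def intro: order.trans[OF _ jn])
    have fE: "finite E" by (rule finN) (auto simp: E_def intro: order.trans[OF _ jn])
    have "card {x \<in> Ir. Q x} = card ((\<lambda>i. (i, j, True)) ` B) + card ((\<lambda>(i, s). (i, j, s)) ` (E \<times> (UNIV :: bool set)))"
      unfolding Ir_eq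
      apply (rule card_Un_disjoint)
      using fB fE by (auto simp: B_def E_def)
    also have "card ((\<lambda>i. (i, j, True)) ` B) = card B" by (rule card_image) (auto simp: inj_on_def)
    also have "card ((\<lambda>(i, s). (i, j, s)) ` (E \<times> (UNIV :: bool set))) = card (E \<times> (UNIV :: bool set))"
      by (rule card_image) (auto simp: inj_on_def)
    also have "\<dots> = 2 * card E" by (simp add: card_cartesian_product)
    finally show ?thesis .
  qed
  have cAB: "card A = card B"
  proof -
    have "p ` A = B"
    proof
      show "p ` A \<subseteq> B"
      proof
        fix x assume "x \<in> p ` A"
        then obtain b where b: "b \<in> A" "x = p b" by auto
        have bK: "b \<in> K" using b j1 unfolding A_def K_def by auto
        have "p b \<in> K" using pK[OF bK] .
        moreover have "p (p b) = b" using p_invol[of b] bK unfolding K_def by auto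
        ultimately show "x \<in> B" using b unfolding A_def B_def K_def by auto
      qed
      show "B \<subseteq> p ` A"
      proof
        fix i assume i: "i \<in> B"
        have iK: "i \<in> K" using i jn unfolding B_def K_def by auto
        have "p i \<in> K" using pK[OF iK] .
        moreover have "p (p i) = i" using p_invol[of i] iK unfolding K_def by auto
        ultimately have "p i \<in> A" using i unfolding A_def B_def K_def by auto
        then show "i \<in> p ` A" using \<open>p (p i) = i\<close> by (metis image_eqI)
      qed
    qed
    moreover have "inj_on p A"
      by (rule inj_onI) (use p_inj j1 in \<open>auto simp: A_def\<close>)
    ultimately show ?thesis using card_image by metis
  qed
  show ?thesis using c1 cA cIr cAB unfolding I1_def Ic_def by simp
qed

lemma cardShort: "card (shs t {a \<in> {1..n}. cs a = -1}) = card (shs t {a \<in> K. cs a = -1}) + card (shs t {1}) + card (shs t {j})"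
proof (cases "t = TypeB")
  case True
  have "{a \<in> {1..n}. cs a = -1} = insert 1 (insert j {a \<in> K. cs a = -1})"
    using p1 pj j1 jn unfolding K_def by auto
  moreover have "1 \<notin> insert j {a \<in> K. cs a = -1}" "j \<notin> {a \<in> K. cs a = -1}" using j1 unfolding K_def by auto
  moreover have "finite {a \<in> K. cs a = -1}" using finK by auto
  ultimately show ?thesis using True by (simp add: shs_card)
qed (simp add: shs_def)

end


context rsj begin

lemma ep_D_range: assumes "ep a b \<in> D" "a < b" shows "1 \<le> a \<and> b \<le> n"
proof -
  have "ep a b \<in> pos_roots t n" using assms DPhi by auto
  then show ?thesis
  proof (cases rule: root_cases)
    case (r a' b' s)
    then show ?thesis using assms(2) by (cases s) (auto simp: rv_def ep_eq_iff em_ne_ep)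
  next
    case (e a') then show ?thesis using assms(2) eps_ne_ep by auto
  qed
qed

lemma em_D_range: assumes "em a b \<in> D" "a < b" shows "1 \<le> a \<and> b \<le> n"
proof -
  have "em a b \<in> pos_roots t n" using assms DPhi by auto
  then show ?thesis
  proof (cases rule: root_cases)
    case (r a' b' s)
    then show ?thesis using assms(2) by (cases s) (auto simp: rv_def em_eq_iff em_ne_ep)
  next
    case (e a') then show ?thesis using assms(2) eps_ne_em by auto
  qed
qed

lemma eps_D: assumes "eps i \<in> D" shows "t = TypeB \<and> 1 \<le> i \<and> i \<le> n"
proof -
  have "eps i \<in> pos_roots t n" using assms DPhi by auto
  then show ?thesis
  proof (cases rule: root_cases)
    case (r a' b' s)
    then show ?thesis by (cases s) (auto simp: rv_def eps_ne_em eps_ne_ep)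
  next
    case (e a') then show ?thesis by auto
  qed
qed

lemma ep_dup: assumes "ep a b \<in> D" "ep c d \<in> D" "a < b" "c < d" "a = c \<or> a = d \<or> b = c \<or> b = d"
  shows "a = c \<and> b = d"
proof (cases "ep a b = ep c d")
  case True then show ?thesis using assms(3,4) by (auto simp: ep_eq_iff)
next
  case False
  then have "inner_n n (ep a b) (ep c d) = 0" using orthD assms(1,2) by auto
  moreover have "1 \<le> a \<and> b \<le> n" "1 \<le> c \<and> d \<le> n" using ep_D_range assms by auto
  ultimately show ?thesis using assms(3,4,5) by (auto simp: inner_all split: if_splits)
qed

lemma eps_ep_D: assumes "eps i \<in> D" "ep c d \<in> D" "c < d" "i = c \<or> i = d" shows False
proof -
  have "eps i \<noteq> ep c d" using eps_ne_ep assms(3) by auto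
  then have "inner_n n (eps i) (ep c d) = 0" using orthD assms(1,2) by auto
  moreover have "1 \<le> i \<and> i \<le> n" using eps_D assms by auto
  ultimately show False using assms(3,4) by (auto simp: inner_all split: if_splits)
qed

lemma ep_in_D_cs: assumes "ep a b \<in> D" "a < b" "m = a \<or> m = b"
  shows "cs m = -1 \<and> (p m = a \<or> p m = b)"
proof -
  have r: "1 \<le> a" "b \<le> n" using ep_D_range assms by auto
  have m: "1 \<le> m" "m \<le> n" using r assms by auto
  have inm: "ep a b \<in> Dm m" using assms unfolding Dm_def by auto
  consider (c0) "Dm m = {}" | (c1) \<beta> where "Dm m = {\<beta>}"
    | (c2) a' b' where "1 \<le> a'" "a' < b'" "b' \<le> n" "m = a' \<or> m = b'" "Dm m = {em a' b', ep a' b'}"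
    using Dm_cases[of m] by blast
  then show ?thesis
  proof cases
    case c0 then show ?thesis using inm by simp
  next
    case (c1 \<beta>) note h = c1
    then have hb: "Dm m = {ep a b}" using inm by auto
    have "sig n D (eps m) = (\<lambda>k. -1 * eps (if m = a then b else a) k)"
      unfolding sig_eps[OF m] hb using assms r by (auto simp: inner_all fun_eq_iff)
    from pc_eq[OF m this] show ?thesis by auto
  next
    case (c2 a' b') note h = c2
    then have "ep a b \<in> {em a' b', ep a' b'}" using inm by simp
    then have "a = a' \<and> b = b'" using assms(2) h(2) by (auto simp: ep_eq_iff em_ne_ep)
    then have "em a b \<in> D" using h(5) unfolding Dm_def by auto
    from pair_Dm(2)[OF r(1) assms(2) r(2) this assms(1,3)] pc_eq[OF m] show ?thesis
      using assms(3) by force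
  qed
qed

lemma eps_in_D_cs: assumes "eps i \<in> D" shows "cs i = -1 \<and> p i = i"
proof -
  have m: "1 \<le> i" "i \<le> n" and tB: "t = TypeB" using eps_D assms by auto
  have inm: "eps i \<in> Dm i" using assms unfolding Dm_def by auto
  consider (c0) "Dm i = {}" | (c1) \<beta> where "Dm i = {\<beta>}"
    | (c2) a' b' where "1 \<le> a'" "a' < b'" "b' \<le> n" "i = a' \<or> i = b'" "Dm i = {em a' b', ep a' b'}"
    using Dm_cases[of i] by blast
  then show ?thesis
  proof cases
    case c0 then show ?thesis using inm by simp
  next
    case (c1 \<beta>) note h = c1
    then have hb: "Dm i = {eps i}" using inm by auto
    have "sig n D (eps i) = (\<lambda>k. -1 * eps i k)"
      unfolding sig_eps[OF m] hb using m by (auto simp: inner_all fun_eq_iff)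
    from pc_eq[OF m this] show ?thesis by auto
  next
    case (c2 a' b') note h = c2
    then have "eps i \<in> {em a' b', ep a' b'}" using inm by simp
    then show ?thesis using h(2) by (auto simp: eps_ne_em eps_ne_ep)
  qed
qed

lemma E_char: "i \<in> E \<longleftrightarrow> 1 < i \<and> i < j \<and> (eps i \<in> D \<or> (\<exists>s. i < s \<and> s < j \<and> ep i s \<in> D)
   \<or> (\<exists>l. 1 < l \<and> l < i \<and> ep l i \<in> D) \<or> (\<exists>s. j < s \<and> em i s \<in> D \<and> ep i s \<in> D))"
proof
  assume iE: "i \<in> E"
  then have i: "1 < i" "i < j" "p i < j" "cs i = -1" unfolding E_def by auto
  have m: "1 \<le> i" "i \<le> n" using i jn by auto
  have no1: "ep 1 i \<notin> D" using ep_dup[OF _ e2, of 1 i] i by auto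
  have noj: "ep i j \<notin> D" using ep_dup[OF _ e2, of i j] i by auto
  have DmD: "x \<in> D" if "x \<in> Dm i" for x using that unfolding Dm_def by auto
  from sig_eps_cases[OF m] show "1 < i \<and> i < j \<and> (eps i \<in> D \<or> (\<exists>s. i < s \<and> s < j \<and> ep i s \<in> D)
   \<or> (\<exists>l. 1 < l \<and> l < i \<and> ep l i \<in> D) \<or> (\<exists>s. j < s \<and> em i s \<in> D \<and> ep i s \<in> D))"
  proof (elim disjE exE conjE)
    assume "sig n D (eps i) = (\<lambda>k. 1 * eps i k)"
    from pc_eq[OF m this] i show ?thesis by simp
  next
    assume "Dm i = {eps i}" then show ?thesis using i DmD by auto
  next
    fix b assume "sig n D (eps i) = (\<lambda>k. 1 * eps b k)"
    from pc_eq[OF m this] i show ?thesis by simp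
  next
    fix a assume "sig n D (eps i) = (\<lambda>k. 1 * eps a k)"
    from pc_eq[OF m this] i show ?thesis by simp
  next
    fix b assume h: "i < b" "Dm i = {ep i b}" "sig n D (eps i) = (\<lambda>k. -1 * eps b k)"
    from pc_eq[OF m h(3)] have "p i = b" by simp
    then show ?thesis using h i DmD by auto
  next
    fix a assume h: "1 \<le> a" "a < i" "Dm i = {ep a i}"
    have "ep a i \<in> D" using h DmD by auto
    then have "a \<noteq> 1" using no1 by auto
    then show ?thesis using h i \<open>ep a i \<in> D\<close> by auto
  next
    fix b assume h: "i < b" "Dm i = {em i b, ep i b}"
    have "ep i b \<in> D" "em i b \<in> D" using h DmD by auto
    then have "b \<noteq> j" using noj by auto
    then show ?thesis using h i \<open>ep i b \<in> D\<close> \<open>em i b \<in> D\<close> by (cases "b < j") auto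
  next
    fix a assume h: "1 \<le> a" "a < i" "Dm i = {em a i, ep a i}"
    have "ep a i \<in> D" using h DmD by auto
    then have "a \<noteq> 1" using no1 by auto
    then show ?thesis using h i \<open>ep a i \<in> D\<close> by auto
  qed
next
  assume h: "1 < i \<and> i < j \<and> (eps i \<in> D \<or> (\<exists>s. i < s \<and> s < j \<and> ep i s \<in> D)
   \<or> (\<exists>l. 1 < l \<and> l < i \<and> ep l i \<in> D) \<or> (\<exists>s. j < s \<and> em i s \<in> D \<and> ep i s \<in> D))"
  then have i: "1 < i" "i < j" by auto
  have m: "1 \<le> i" "i \<le> n" using i jn by auto
  have "p i < j \<and> cs i = -1"
    using h
  proof (elim conjE disjE exE)
    assume "eps i \<in> D" then show ?thesis using eps_in_D_cs i by auto
  next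
    fix s assume "i < s" "s < j" "ep i s \<in> D" then show ?thesis using ep_in_D_cs[of i s i] i by auto
  next
    fix l assume "1 < l" "l < i" "ep l i \<in> D" then show ?thesis using ep_in_D_cs[of l i i] i by auto
  next
    fix s assume s: "j < s" "em i s \<in> D" "ep i s \<in> D"
    have "s \<le> n" using ep_D_range[OF s(3)] s i by auto
    from pair_Dm(2)[of i s i] s i this have "sig n D (eps i) = (\<lambda>k. -1 * eps i k)" by auto
    from pc_eq[OF m this] show ?thesis using i by simp
  qed
  then show "i \<in> E" using i unfolding E_def by auto
qed

lemma cardE: "card E = card {l. 1 < l \<and> l < j \<and> eps l \<in> D}
   + 2 * card {(l, s). 1 < l \<and> l < s \<and> s < j \<and> ep l s \<in> D}
   + card {(l, s). 1 < l \<and> l < j \<and> j < s \<and> em l s \<in> D \<and> ep l s \<in> D}"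
proof -
  define S3 where "S3 = {l. 1 < l \<and> l < j \<and> eps l \<in> D}"
  define S1 where "S1 = {(l, s). 1 < l \<and> l < s \<and> s < j \<and> ep l s \<in> D}"
  define S2 where "S2 = {(l, s). 1 < l \<and> l < j \<and> j < s \<and> em l s \<in> D \<and> ep l s \<in> D}"
  have Eeq: "E = ((S3 \<union> fst ` S1) \<union> snd ` S1) \<union> fst ` S2"
  proof
    show "E \<subseteq> ((S3 \<union> fst ` S1) \<union> snd ` S1) \<union> fst ` S2"
    proof
      fix i assume "i \<in> E"
      then have h: "1 < i \<and> i < j \<and> (eps i \<in> D \<or> (\<exists>s. i < s \<and> s < j \<and> ep i s \<in> D)
        \<or> (\<exists>l. 1 < l \<and> l < i \<and> ep l i \<in> D) \<or> (\<exists>s. j < s \<and> em i s \<in> D \<and> ep i s \<in> D))"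
        using E_char by blast
      then show "i \<in> ((S3 \<union> fst ` S1) \<union> snd ` S1) \<union> fst ` S2"
      proof (elim conjE disjE exE)
        assume "eps i \<in> D" then show ?thesis using h unfolding S3_def by auto
      next
        fix s assume "i < s" "s < j" "ep i s \<in> D"
        then have "(i, s) \<in> S1" using h unfolding S1_def by auto
        then show ?thesis by (metis UnI1 UnI2 fst_conv image_eqI)
      next
        fix l assume "1 < l" "l < i" "ep l i \<in> D"
        then have "(l, i) \<in> S1" using h unfolding S1_def by auto
        then show ?thesis by (metis UnI1 UnI2 snd_conv image_eqI)
      next
        fix s assume "j < s" "em i s \<in> D" "ep i s \<in> D"
        then have "(i, s) \<in> S2" using h unfolding S2_def by auto
        then show ?thesis by (metis UnI2 fst_conv image_eqI)
      qed
    qed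
    show "((S3 \<union> fst ` S1) \<union> snd ` S1) \<union> fst ` S2 \<subseteq> E"
    proof
      fix i assume "i \<in> ((S3 \<union> fst ` S1) \<union> snd ` S1) \<union> fst ` S2"
      then show "i \<in> E" unfolding E_char unfolding S1_def S2_def S3_def by auto
    qed
  qed
  have f1: "finite S1" by (rule finite_subset[of _ "{..<j} \<times> {..<j}"]) (auto simp: S1_def)
  have f2: "finite S2"
  proof (rule finite_subset[of _ "{..n} \<times> {..n}"])
    show "S2 \<subseteq> {..n} \<times> {..n}" using ep_D_range jn unfolding S2_def by fastforce
  qed auto
  have f3: "finite S3" by (rule finite_subset[of _ "{..<j}"]) (auto simp: S3_def)
  have d1: "S3 \<inter> fst ` S1 = {}"
    unfolding S1_def S3_def using eps_ep_D by fastforce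
  have d2: "(S3 \<union> fst ` S1) \<inter> snd ` S1 = {}"
  proof -
    have "S3 \<inter> snd ` S1 = {}" unfolding S1_def S3_def using eps_ep_D by fastforce
    moreover have "fst ` S1 \<inter> snd ` S1 = {}"
    proof (rule ccontr)
      assume "fst ` S1 \<inter> snd ` S1 \<noteq> {}"
      then obtain i s l where "ep i s \<in> D" "ep l i \<in> D" "l < i" "i < s" unfolding S1_def by auto
      then show False using ep_dup[of l i i s] by auto
    qed
    ultimately show ?thesis by auto
  qed
  have d3: "((S3 \<union> fst ` S1) \<union> snd ` S1) \<inter> fst ` S2 = {}"
  proof -
    have "S3 \<inter> fst ` S2 = {}" unfolding S2_def S3_def using eps_ep_D by fastforce
    moreover have "fst ` S1 \<inter> fst ` S2 = {}"
    proof (rule ccontr)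
      assume "fst ` S1 \<inter> fst ` S2 \<noteq> {}"
      then obtain i s s' where "ep i s \<in> D" "ep i s' \<in> D" "i < s" "s < j" "j < s'" unfolding S1_def S2_def by auto
      then show False using ep_dup[of i s i s'] by auto
    qed
    moreover have "snd ` S1 \<inter> fst ` S2 = {}"
    proof (rule ccontr)
      assume "snd ` S1 \<inter> fst ` S2 \<noteq> {}"
      then obtain i l s' where "ep l i \<in> D" "ep i s' \<in> D" "l < i" "i < j" "j < s'" unfolding S1_def S2_def by auto
      then show False using ep_dup[of l i i s'] by auto
    qed
    ultimately show ?thesis by auto
  qed
  have i1: "inj_on fst S1"
    by (rule inj_onI) (auto simp: S1_def dest: ep_dup)
  have i2: "inj_on snd S1"
    by (rule inj_onI) (auto simp: S1_def dest: ep_dup)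
  have i3: "inj_on fst S2"
    by (rule inj_onI) (auto simp: S2_def dest: ep_dup)
  have "card E = card S3 + card (fst ` S1) + card (snd ` S1) + card (fst ` S2)"
    unfolding Eeq
    by (simp add: card_Un_disjoint f1 f2 f3 d1 d2 d3)
  also have "\<dots> = card S3 + 2 * card S1 + card S2"
    using card_image[OF i1] card_image[OF i2] card_image[OF i3] by simp
  finally show ?thesis unfolding S1_def S2_def S3_def .
qed

end


context rsj begin

lemma Dt_ep: assumes "1 < l" "l < s" "s \<noteq> j" "l \<noteq> j" shows "ep l s \<in> Dt \<longleftrightarrow> ep l s \<in> D"
proof
  assume h: "ep l s \<in> D"
  have "(l, s, True) \<in> Iset n" using ep_D_range[OF h assms(2)] assms unfolding Iset_def by auto
  then have "rv (l, s, True) \<in> Phit" using rv_Phit assms by auto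
  then show "ep l s \<in> Dt" using h unfolding Dt_def rv_def by auto
qed (auto simp: Dt_def)

lemma Dt_em: assumes "1 < l" "l < s" "s \<noteq> j" "l \<noteq> j" shows "em l s \<in> Dt \<longleftrightarrow> em l s \<in> D"
proof
  assume h: "em l s \<in> D"
  have "(l, s, False) \<in> Iset n" using em_D_range[OF h assms(2)] assms unfolding Iset_def by auto
  then have "rv (l, s, False) \<in> Phit" using rv_Phit assms by auto
  then show "em l s \<in> Dt" using h unfolding Dt_def rv_def by auto
qed (auto simp: Dt_def)

lemma Dt_eps: assumes "1 < l" "l < j" shows "eps l \<in> Dt \<longleftrightarrow> eps l \<in> D"
proof
  assume h: "eps l \<in> D"
  have "t = TypeB" "1 \<le> l" "l \<le> n" using eps_D[OF h] by auto
  then have "eps l \<in> Phit" using eps_Phit assms unfolding K_def by auto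
  then show "eps l \<in> Dt" using h unfolding Dt_def by auto
qed (auto simp: Dt_def)

lemma main:
  "weyl_length t n (refl_prod n D) =
          card {\<alpha> \<in> Phit. refl_prod n Dt \<alpha> \<notin> Phit} + card (Cols t n 1) + card (Cols t n j)
          + 4 * card {(l, s). 1 < l \<and> l < s \<and> s < j \<and> (\<lambda>k. eps l k + eps s k) \<in> Dt}
          + 2 * card {(l, s). 1 < l \<and> l < j \<and> j < s \<and> (\<lambda>k. eps l k - eps s k) \<in> Dt \<and> (\<lambda>k. eps l k + eps s k) \<in> Dt}
          + 2 * card {l. 1 < l \<and> l < j \<and> eps l \<in> Dt}"
proof -
  have s1: "{(l, s). 1 < l \<and> l < s \<and> s < j \<and> (\<lambda>k. eps l k + eps s k) \<in> Dt}
      = {(l, s). 1 < l \<and> l < s \<and> s < j \<and> ep l s \<in> D}"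
    unfolding ep_lam using Dt_ep by auto
  have s2: "{(l, s). 1 < l \<and> l < j \<and> j < s \<and> (\<lambda>k. eps l k - eps s k) \<in> Dt \<and> (\<lambda>k. eps l k + eps s k) \<in> Dt}
      = {(l, s). 1 < l \<and> l < j \<and> j < s \<and> em l s \<in> D \<and> ep l s \<in> D}"
    unfolding ep_lam em_lam using Dt_ep Dt_em by auto
  have s3: "{l. 1 < l \<and> l < j \<and> eps l \<in> Dt} = {l. 1 < l \<and> l < j \<and> eps l \<in> D}"
    using Dt_eps by auto
  have rp: "refl_prod n D = sig n D" by (rule refl_prod_sig[OF finD orth])
  have rpt: "refl_prod n Dt = sig n Dt" by (rule refl_prod_sig[OF finDt orthDt])
  show ?thesis
    unfolding s1 s2 s3 rp rpt LHS lprime card_Cols[OF order.refl[of 1] order.trans[OF less_imp_le[OF j1] jn]]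
      card_Cols[OF less_imp_le[OF j1] jn] cardQ cardShort
    using cardE by simp
qed

end

theorem lemma4p3:
  fixes t :: rtype and n j :: nat and D :: "(nat \<Rightarrow> real) set"
  assumes tBD: "t = TypeB \<or> t = TypeD"
    and DPhi: "D \<subseteq> pos_roots t n"
    and orth: "orthogonal_set n D"
    and A: "assumption_A t n D"
    and j: "1 < j" "j \<le> n"
    and DC1: "D \<inter> Cols t n 1 = {(\<lambda>k. eps 1 k - eps j k), (\<lambda>k. eps 1 k + eps j k)}"
  shows
    "let Phit = pos_roots t n - (Cols t n 1 \<union> Cols t n j \<union> Rows t n (int j) \<union> Rows t n (- int j));
         Dt = D \<inter> Phit;
         sigmat = refl_prod n Dt;
         l' = card {\<alpha> \<in> Phit. sigmat \<alpha> \<notin> Phit}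
     in weyl_length t n (refl_prod n D) =
          l' + card (Cols t n 1) + card (Cols t n j)
          + 4 * card {(l, s). 1 < l \<and> l < s \<and> s < j \<and> (\<lambda>k. eps l k + eps s k) \<in> Dt}
          + 2 * card {(l, s). 1 < l \<and> l < j \<and> j < s \<and> (\<lambda>k. eps l k - eps s k) \<in> Dt \<and> (\<lambda>k. eps l k + eps s k) \<in> Dt}
          + 2 * card {l. 1 < l \<and> l < j \<and> eps l \<in> Dt}"
proof -
  have e: "em 1 j \<in> D" "ep 1 j \<in> D" using DC1 unfolding em_lam ep_lam by auto
  interpret rsj t n D j
    by unfold_locales (use tBD DPhi orth j e in auto)
  show ?thesis unfolding Let_def using main unfolding Phit_def Dt_def by simp
qed



end
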